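(* Suppose Assumption A (constant $d$) and Assumption E hold, and let $\epsilon_\theta\in(0,1)$ be such that $m^\circ_\epsilon\le G_\epsilon$ for all $\epsilon\in(0,\epsilon_\theta)$. Then for all $\epsilon\in(0,\epsilon_\theta)$: (i) $\sum_{j=1}^{G_\epsilon}\sigma_j^2\lambda_j^2\epsilon^{-2}\,\mathbb E_{\theta^\circ}\big\{(Y_j-\lambda_j\theta^\circ_j)P_{M|Y}(j\le M\le G_\epsilon)\big\}^2\le\epsilon\,m^+_\epsilon\bar\Lambda_{m^+_\epsilon}+10\Lambda_1\exp\big(-m^\circ_\epsilon/5+2\log G_\epsilon\big)$; (ii) $\sum_{j=1}^{G_\epsilon}(\eta_j-\theta^\circ_j)^2\,\mathbb E_{\theta^\circ}\big[P_{M|Y}(1\le M<j)+(\sigma_j/\tau_j)^2P_{M|Y}(j\le M\le G_\epsilon)\big]+\sum_{j>G_\epsilon}(\eta_j-\theta^\circ_j)^2\le b_{m^-_\epsilon}+\|\eta-\theta^\circ\|^2\big\{d^{-2}\epsilon\Lambda_{(m^-_\epsilon)}+2\exp\big(-m^\circ_\epsilon/5+\log G_\epsilon\big)\big\}$.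
   Context: Let $\ell^2$ be the space of square-summable real sequences with norm $\|\cdot\|$. Fix a bounded real sequence $\lambda=(\lambda_j)_{j\ge1}$ with $\lambda_j\ne0$ for all $j$, a noise level $\epsilon\in(0,1)$ and a true parameter $\theta^\circ\in\ell^2$. The data $Y=(Y_j)_{j\ge1}$ satisfy $Y_j=\lambda_j\theta^\circ_j+\sqrt\epsilon\,\xi_j$ with $\xi_j$ i.i.d. $N(0,1)$; $\mathbb E_{\theta^\circ}$ denotes expectation under this law. Fix prior means $\eta=(\eta_j)_{j\ge1}$ with $\theta^\circ-\eta\in\ell^2$ and prior variances $\tau_j\in(0,\infty)$ (possibly depending on $\epsilon$). Put $\sigma_j:=(\lambda_j^2\epsilon^{-1}+\tau_j^{-1})^{-1}$, $\theta^Y_j:=\sigma_j(\tau_j^{-1}\eta_j+\lambda_j\epsilon^{-1}Y_j)$, $\hat\theta^m_j:=\theta^Y_j$ for $j\le m$, $\hat\theta^m_j:=\eta_j$ for $j>m$. Define $b_m:=\sum_{j>m}(\theta^\circ_j-\eta_j)^2$, $\Lambda_j:=\lambda_j^{-2}$, $\Lambda_{(m)}:=\max_{1\le j\le m}\Lambda_j$, $\bar\Lambda_m:=m^{-1}\sum_{j=1}^m\Lambda_j$, $\Phi^m_\epsilon:=b_m\vee\epsilon m\bar\Lambda_m$, $m^\circ_\epsilon:=\min\{m\ge1:\Phi^m_\epsilon\le\Phi^k_\epsilon\ \forall k\ge1\}$, $\Phi^\circ_\epsilon:=\min_{m\ge1}\Phi^m_\epsilon$. Let $G_\epsilon:=\max\{1\le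 m\le\lfloor\epsilon^{-1}\rfloor:\epsilon\Lambda_{(m)}\le\Lambda_1\}$. Assumption A: there is $d>0$ with $\tau_j\ge d\,(\epsilon^{1/2}\Lambda_j^{1/2}\vee\epsilon\Lambda_j)$ for all $1\le j\le G_\epsilon$, $\epsilon\in(0,1)$. Assumption E: there are constants $C_\lambda\ge1$, $L_\lambda\ge1$ such that for all $k,l\in\mathbb N$: (i) $\sup_{j>k}\lambda_j^2\le C_\lambda\min_{1\le j\le k}\lambda_j^2=C_\lambda\Lambda_{(k)}^{-1}$; (ii) $\Lambda_{(kl)}\le\Lambda_{(k)}\Lambda_{(l)}$; (iii) $\Lambda_{(k)}/\bar\Lambda_k\le L_\lambda$. Hierarchical prior: a random dimension $M$ with values in $\{1,\dots,G_\epsilon\}$ and $P(M=m)\propto\exp(-3C_\lambda m/2)\prod_{j=1}^m(\tau_j/\sigma_j)^{1/2}$; conditionally on $M=m$ the parameter $\vartheta^M$ has independent coordinates $N(\eta_j,\tau_j)$ for $j\le m$ and equal to $\eta_j$ for $j>m$, and $Y_j=\lambda_j\vartheta^M_j+\sqrt\epsilon\xi_j$. The posterior of $M$ is $P_{M|Y}(M=m)=\exp(\frac12\{\|\hat\theta^m-\eta\|_\sigma^2-3C_\lambda m\})/\sum_{k=1}^{G_\epsilon}\exp(\frac12\{\|\hat\theta^k-\eta\|_\sigma^2-3C_\lambda k\})$ with $\|x\|_\sigma^2:=\sum_j x_j^2/\sigma_j$. Finally $m^-_\epsilon:=\min\{m\in\{1,\dots,m^\circ_\epsilon\}:b_m\le8L_\lambda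 C_\lambda(1+1/d)\Phi^\circ_\epsilon\}$ and $m^+_\epsilon:=\max\{m\in\{m^\circ_\epsilon,\dots,G_\epsilon\}:m\le5L_\lambda(\epsilon\Lambda_{(m^\circ_\epsilon)})^{-1}\Phi^\circ_\epsilon\}$. *)

theory Defs
  imports "HOL-Probability.Probability"
begin

text \<open>Sequences are functions nat => real; only indices j >= 1 are used.
  The noise level eps is a real in (0,1); prior variances tau may depend on eps,
  hence tau :: real => nat => real.\<close>

definition sig :: "(nat \<Rightarrow> real) \<Rightarrow> (real \<Rightarrow> nat \<Rightarrow> real) \<Rightarrow> real \<Rightarrow> nat \<Rightarrow> real" where
  "sig lam tau eps j = 1 / ((lam j)\<^sup>2 / eps + 1 / tau eps j)"

definition thetaY :: "(nat \<Rightarrow> real) \<Rightarrow> (real \<Rightarrow> nat \<Rightarrow> real) \<Rightarrow> (nat \<Rightarrow> real) \<Rightarrow> real \<Rightarrow> (nat \<Rightarrow> real) \<Rightarrow> nat \<Rightarrow> real" where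
  "thetaY lam tau eta eps Y j = sig lam tau eps j * (eta j / tau eps j + lam j * Y j / eps)"

definition Lam :: "(nat \<Rightarrow> real) \<Rightarrow> nat \<Rightarrow> real" where
  "Lam lam j = 1 / (lam j)\<^sup>2"

definition Lmax :: "(nat \<Rightarrow> real) \<Rightarrow> nat \<Rightarrow> real" where
  "Lmax lam m = Max (Lam lam ` {1..m})"

definition Lbar :: "(nat \<Rightarrow> real) \<Rightarrow> nat \<Rightarrow> real" where
  "Lbar lam m = (\<Sum>j=1..m. Lam lam j) / real m"

definition bias :: "(nat \<Rightarrow> real) \<Rightarrow> (nat \<Rightarrow> real) \<Rightarrow> nat \<Rightarrow> real" where
  "bias th eta m = (\<Sum>\<^sub>\<infinity> j\<in>{m<..}. (th j - eta j)\<^sup>2)"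

definition Phi :: "(nat \<Rightarrow> real) \<Rightarrow> (nat \<Rightarrow> real) \<Rightarrow> (nat \<Rightarrow> real) \<Rightarrow> real \<Rightarrow> nat \<Rightarrow> real" where
  "Phi lam th eta eps m = max (bias th eta m) (eps * real m * Lbar lam m)"

definition mcirc :: "(nat \<Rightarrow> real) \<Rightarrow> (nat \<Rightarrow> real) \<Rightarrow> (nat \<Rightarrow> real) \<Rightarrow> real \<Rightarrow> nat" where
  "mcirc lam th eta eps =
     (LEAST m. 1 \<le> m \<and> (\<forall>k\<ge>1. Phi lam th eta eps m \<le> Phi lam th eta eps k))"

definition Phicirc :: "(nat \<Rightarrow> real) \<Rightarrow> (nat \<Rightarrow> real) \<Rightarrow> (nat \<Rightarrow> real) \<Rightarrow> real \<Rightarrow> real" where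
  "Phicirc lam th eta eps = (INF m\<in>{1..}. Phi lam th eta eps m)"

definition Gdim :: "(nat \<Rightarrow> real) \<Rightarrow> real \<Rightarrow> nat" where
  "Gdim lam eps = Max {m \<in> {1..nat \<lfloor>1 / eps\<rfloor>}. eps * Lmax lam m \<le> Lam lam 1}"

definition assumptionA :: "(nat \<Rightarrow> real) \<Rightarrow> (real \<Rightarrow> nat \<Rightarrow> real) \<Rightarrow> real \<Rightarrow> bool" where
  "assumptionA lam tau d \<longleftrightarrow> d > 0 \<and>
     (\<forall>eps. 0 < eps \<and> eps < 1 \<longrightarrow> (\<forall>j\<in>{1..Gdim lam eps}.
        tau eps j \<ge> d * max (sqrt eps * sqrt (Lam lam j)) (eps * Lam lam j)))"

definition assumptionE :: "(nat \<Rightarrow> real) \<Rightarrow> real \<Rightarrow> real \<Rightarrow> bool" where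
  "assumptionE lam C L \<longleftrightarrow> C \<ge> 1 \<and> L \<ge> 1 \<and>
     (\<forall>k\<ge>1. \<forall>l\<ge>1.
        (SUP j\<in>{k<..}. (lam j)\<^sup>2) \<le> C * (MIN j\<in>{1..k}. (lam j)\<^sup>2) \<and>
        Lmax lam (k * l) \<le> Lmax lam k * Lmax lam l \<and>
        Lmax lam k / Lbar lam k \<le> L)"

text \<open>Unnormalised posterior weight of M = k:
  exp((||thetahat^k - eta||_sigma^2 - 3 C k)/2); coordinates j > k of thetahat^k - eta vanish.\<close>
definition postw :: "(nat \<Rightarrow> real) \<Rightarrow> (real \<Rightarrow> nat \<Rightarrow> real) \<Rightarrow> (nat \<Rightarrow> real) \<Rightarrow> real \<Rightarrow> real \<Rightarrow> (nat \<Rightarrow> real) \<Rightarrow> nat \<Rightarrow> real" where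
  "postw lam tau eta C eps Y k =
     exp ((\<Sum>j=1..k. (thetaY lam tau eta eps Y j - eta j)\<^sup>2 / sig lam tau eps j) / 2 - 3 * C * real k / 2)"

definition postM :: "(nat \<Rightarrow> real) \<Rightarrow> (real \<Rightarrow> nat \<Rightarrow> real) \<Rightarrow> (nat \<Rightarrow> real) \<Rightarrow> real \<Rightarrow> real \<Rightarrow> (nat \<Rightarrow> real) \<Rightarrow> nat \<Rightarrow> real" where
  "postM lam tau eta C eps Y m =
     postw lam tau eta C eps Y m / (\<Sum>k=1..Gdim lam eps. postw lam tau eta C eps Y k)"

definition noise :: "(nat \<Rightarrow> real) measure" where
  "noise = (\<Pi>\<^sub>M j\<in>UNIV. density lborel std_normal_density)"

definition obs :: "(nat \<Rightarrow> real) \<Rightarrow> (nat \<Rightarrow> real) \<Rightarrow> real \<Rightarrow> (nat \<Rightarrow> real) \<Rightarrow> nat \<Rightarrow> real" where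
  "obs lam th eps xi j = lam j * th j + sqrt eps * xi j"

definition mminus :: "(nat \<Rightarrow> real) \<Rightarrow> (nat \<Rightarrow> real) \<Rightarrow> (nat \<Rightarrow> real) \<Rightarrow> real \<Rightarrow> real \<Rightarrow> real \<Rightarrow> real \<Rightarrow> nat" where
  "mminus lam th eta C L d eps =
     Min {m \<in> {1..mcirc lam th eta eps}. bias th eta m \<le> 8 * L * C * (1 + 1 / d) * Phicirc lam th eta eps}"

definition mplus :: "(nat \<Rightarrow> real) \<Rightarrow> (nat \<Rightarrow> real) \<Rightarrow> (nat \<Rightarrow> real) \<Rightarrow> real \<Rightarrow> real \<Rightarrow> nat" where
  "mplus lam th eta L eps =
     Max {m \<in> {mcirc lam th eta eps..Gdim lam eps}.
            real m \<le> 5 * L * Phicirc lam th eta eps / (eps * Lmax lam (mcirc lam th eta eps))}"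

end

theory Submission
  imports Defs
begin

abbreviation "N \<equiv> density lborel std_normal_density"
interpretation Nps: prob_space N by (rule prob_space_normal_density) simp
interpretation PP: product_prob_space "\<lambda>_::nat. N" UNIV
  by unfold_locales
lemma noise_prod:
  assumes "finite J" "\<And>i. i \<in> J \<Longrightarrow> f i \<in> borel_measurable borel"
  shows "(\<integral>\<^sup>+x. (\<Prod>i\<in>J. f i (x i)) \<partial>noise) = (\<Prod>i\<in>J. \<integral>\<^sup>+y. f i y \<partial>N)"
proof -
  have "(\<integral>\<^sup>+x. (\<Prod>i\<in>J. f i (x i)) \<partial>noise) = (\<integral>\<^sup>+x. (\<Prod>i\<in>J. f i (restrict x J i)) \<partial>noise)"
    by (intro nn_integral_cong prod.cong) auto
  also have "\<dots> = (\<integral>\<^sup>+y. (\<Prod>i\<in>J. f i (y i)) \<partial>distr noise (PiM J (\<lambda>_. N)) (\<lambda>x. restrict x J))"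
    unfolding noise_def using assms
    by (subst nn_integral_distr) (auto intro!: measurable_restrict_subset)
  also have "\<dots> = (\<integral>\<^sup>+y. (\<Prod>i\<in>J. f i (y i)) \<partial>PiM J (\<lambda>_. N))"
    unfolding noise_def using assms by (subst PP.distr_PiM_restrict_finite) auto
  also have "\<dots> = (\<Prod>i\<in>J. \<integral>\<^sup>+y. f i y \<partial>N)"
    using assms by (subst PP.product_nn_integral_prod) auto
  finally show ?thesis .
qed

lemma nd_one: "0 < s \<Longrightarrow> (\<integral>\<^sup>+x. ennreal (normal_density m s x) \<partial>lborel) = 1"
  by (subst nn_integral_eq_integral) (auto)

lemma gauss_pt:
  fixes a b x :: real
  assumes a: "a < 1/2"
  defines "k \<equiv> 1 - 2*a"
  shows "std_normal_density x * exp (a*x\<^sup>2 + b*x) =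
     exp (b\<^sup>2 / (2*k)) / sqrt k * normal_density (b/k) (1 / sqrt k) x"
proof -
  have k: "k > 0" using a by (simp add: k_def)
  have q: "(x - b/k)\<^sup>2 * k = k*x\<^sup>2 - 2*b*x + b\<^sup>2/k" using k
    by (simp add: power2_eq_square field_simps)
  have sq: "(1 / sqrt k)\<^sup>2 = 1/k" using k by (simp add: power_divide)
  have e: "- x\<^sup>2 / 2 + (a*x\<^sup>2 + b*x) = b\<^sup>2/(2*k) + (-(x - b/k)\<^sup>2 / (2 * (1/sqrt k)\<^sup>2))"
    unfolding sq using k q by (simp add: k_def field_simps) 
  have s: "sqrt (2 * pi * (1 / sqrt k)\<^sup>2) = sqrt (2*pi) / sqrt k"
    using k by (simp add: real_sqrt_divide real_sqrt_mult power_divide)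
  have "std_normal_density x * exp (a*x\<^sup>2 + b*x) = 1 / sqrt (2 * pi) * exp (- x\<^sup>2 / 2 + (a*x\<^sup>2 + b*x))"
    by (subst exp_add) (simp add: std_normal_density_def)
  also have "\<dots> = exp (b\<^sup>2 / (2*k)) / sqrt k * normal_density (b/k) (1 / sqrt k) x"
    unfolding e normal_density_def s exp_add using k by (simp add: field_simps)
  finally show ?thesis .
qed

lemma gauss:
  fixes a b :: real
  assumes a: "a < 1/2"
  shows "(\<integral>\<^sup>+x. ennreal (exp (a*x\<^sup>2 + b*x)) \<partial>N) = ennreal (exp (b\<^sup>2 / (2*(1-2*a))) / sqrt (1-2*a))"
proof -
  have k: "1 - 2*a > 0" using a by simp
  have "(\<integral>\<^sup>+x. ennreal (exp (a*x\<^sup>2 + b*x)) \<partial>N) = (\<integral>\<^sup>+x. ennreal (std_normal_density x) * ennreal (exp (a*x\<^sup>2 + b*x)) \<partial>lborel)"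
    by (subst nn_integral_density) auto
  also have "\<dots> = (\<integral>\<^sup>+x. ennreal (exp (b\<^sup>2 / (2*(1-2*a))) / sqrt (1-2*a)) * ennreal (normal_density (b/(1-2*a)) (1 / sqrt (1-2*a)) x) \<partial>lborel)"
    using gauss_pt[OF a] k by (intro nn_integral_cong) (simp add: ennreal_mult'[symmetric])
  also have "\<dots> = ennreal (exp (b\<^sup>2 / (2*(1-2*a))) / sqrt (1-2*a))"
    using k by (subst nn_integral_cmult) (auto simp: nd_one)
  finally show ?thesis .
qed

lemma ennreal_mm: "(a::ennreal) \<le> b \<Longrightarrow> c \<le> e \<Longrightarrow> a * c \<le> b * e"
  by (rule mult_mono) auto

lemma prod_ennreal_le:
  assumes "finite A" "\<And>i. i \<in> A \<Longrightarrow> f i \<le> ennreal (g i)" "\<And>i. i \<in> A \<Longrightarrow> 0 \<le> g i"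
  shows "prod f A \<le> ennreal (prod g A)"
  using assms
proof (induction A rule: finite_induct)
  case empty then show ?case by simp
next
  case (insert a A)
  have "prod f (insert a A) = f a * prod f A" using insert by simp
  also have "\<dots> \<le> ennreal (g a) * ennreal (prod g A)"
    using insert by (intro mult_mono) auto
  also have "\<dots> = ennreal (prod g (insert a A))"
    using insert by (simp add: ennreal_mult prod_nonneg)
  finally show ?case .
qed

lemma L1:
  fixes r u :: real assumes r: "0 \<le> r" "r \<le> 1"
  shows "(\<integral>\<^sup>+x. ennreal (exp (-(r/2)*(u+x)\<^sup>2)) \<partial>N) \<le> ennreal (exp (-r*u\<^sup>2/4))"
proof -
  have pt: "\<And>x. exp (-(r/2)*(u+x)\<^sup>2) = exp (-r*u\<^sup>2/2) * exp ((-r/2)*x\<^sup>2 + (-r*u)*x)"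
    by (simp add: exp_add[symmetric] power2_eq_square algebra_simps)
  have "(\<integral>\<^sup>+x. ennreal (exp (-(r/2)*(u+x)\<^sup>2)) \<partial>N) = ennreal (exp (-r*u\<^sup>2/2)) * (\<integral>\<^sup>+x. ennreal (exp ((-r/2)*x\<^sup>2 + (-r*u)*x)) \<partial>N)"
    unfolding pt by (subst nn_integral_cmult[symmetric]) (auto simp: ennreal_mult)
  also have "\<dots> = ennreal (exp (-r*u\<^sup>2/2) * (exp ((-r*u)\<^sup>2 / (2*(1-2*(-r/2)))) / sqrt (1-2*(-r/2))))"
    using r by (subst gauss) (auto simp: ennreal_mult[symmetric])
  also have "\<dots> \<le> ennreal (exp (-r*u\<^sup>2/4))"
  proof (rule ennreal_leI)
    have k: "1-2*(-r/2) = 1 + r" by simp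
    have a: "r*r*u\<^sup>2 \<le> r*u\<^sup>2" using r by (intro mult_right_mono) (auto intro: mult_left_le_one_le)
    have e1: "-r*u\<^sup>2/2 + (-r*u)\<^sup>2 / (2*(1+r)) \<le> -r*u\<^sup>2/4"
      using r a by (simp add: field_simps power2_eq_square) 
    have s: "1 \<le> sqrt (1+r)" using r by simp
    have "exp (-r*u\<^sup>2/2) * (exp ((-r*u)\<^sup>2 / (2*(1+r))) / sqrt (1+r)) \<le> exp (-r*u\<^sup>2/2) * exp ((-r*u)\<^sup>2 / (2*(1+r)))"
      using s by (intro mult_left_mono) (auto simp: divide_le_eq)
    also have "\<dots> \<le> exp (-r*u\<^sup>2/4)" using e1 by (simp add: exp_add[symmetric])
    finally show "exp (-r*u\<^sup>2/2) * (exp ((-r*u)\<^sup>2 / (2*(1-2*(-r/2)))) / sqrt (1-2*(-r/2))) \<le> exp (-r*u\<^sup>2/4)"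
      unfolding k .
  qed
  finally show ?thesis .
qed


lemma exp_fifth: "1 \<le> exp (1/5::real) * sqrt (3/4)"
proof (rule power2_le_imp_le)
  have "(exp (1/5::real) * sqrt (3/4))\<^sup>2 = exp (2/5) * (3/4)"
  proof -
    have "exp (1/5::real)^2 = exp (2/5)" by (simp add: power2_eq_square exp_add[symmetric])
    then show ?thesis by (simp add: power_mult_distrib)
  qed
  moreover have "exp (2/5::real) \<ge> 1 + 2/5" by (rule exp_ge_add_one_self)
  ultimately show "1\<^sup>2 \<le> (exp (1/5::real) * sqrt (3/4))\<^sup>2" by simp
qed simp

lemma L2:
  fixes r u :: real assumes r: "0 \<le> r" "r \<le> 1"
  shows "(\<integral>\<^sup>+x. ennreal (exp ((r/8)*(u+x)\<^sup>2)) \<partial>N) \<le> ennreal (exp (1/5) * exp (u\<^sup>2/4))"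
proof -
  have pt: "\<And>x. exp ((r/8)*(u+x)\<^sup>2) = exp (r*u\<^sup>2/8) * exp ((r/8)*x\<^sup>2 + (r*u/4)*x)"
    by (simp add: exp_add[symmetric] power2_eq_square algebra_simps)
  have "(\<integral>\<^sup>+x. ennreal (exp ((r/8)*(u+x)\<^sup>2)) \<partial>N) = ennreal (exp (r*u\<^sup>2/8)) * (\<integral>\<^sup>+x. ennreal (exp ((r/8)*x\<^sup>2 + (r*u/4)*x)) \<partial>N)"
    unfolding pt by (subst nn_integral_cmult[symmetric]) (auto simp: ennreal_mult)
  also have "\<dots> = ennreal (exp (r*u\<^sup>2/8) * (exp ((r*u/4)\<^sup>2 / (2*(1-2*(r/8)))) / sqrt (1-2*(r/8))))"
    using r by (subst gauss) (auto simp: ennreal_mult[symmetric])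
  also have "\<dots> \<le> ennreal (exp (1/5) * exp (u\<^sup>2/4))"
  proof (rule ennreal_leI)
    have k: "1-2*(r/8) = 1 - r/4" by simp
    have k1: "3/4 \<le> 1 - r/4" using r by simp
    have a: "(r*u/4)\<^sup>2 \<le> u\<^sup>2/16" using r
      by (simp add: power_mult_distrib power_divide) (metis mult_left_le_one_le power_le_one zero_le_power2 mult.commute)
    have b: "(r*u/4)\<^sup>2 / (2*(1 - r/4)) \<le> (u\<^sup>2/16) / (3/2)"
      using a k1 by (intro frac_le) auto
    have c: "r*u\<^sup>2/8 \<le> u\<^sup>2/8" using r by (simp add: mult_left_le_one_le)
    have e1: "r*u\<^sup>2/8 + (r*u/4)\<^sup>2 / (2*(1 - r/4)) \<le> u\<^sup>2/4"
    proof -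
      have b': "(r*u/4)\<^sup>2 / (2*(1 - r/4)) \<le> u\<^sup>2/24" using b by simp
      show ?thesis using b' c zero_le_power2[of u] by linarith
    qed
    have s: "sqrt (3/4) \<le> sqrt (1 - r/4)" using k1 by simp
    have s2: "1 \<le> exp (1/5) * sqrt (1 - r/4)"
      using exp_fifth s by (meson exp_ge_zero mult_left_mono order_trans)
    have "exp (r*u\<^sup>2/8) * (exp ((r*u/4)\<^sup>2 / (2*(1 - r/4))) / sqrt (1 - r/4))
        = exp (r*u\<^sup>2/8 + (r*u/4)\<^sup>2 / (2*(1 - r/4))) / sqrt (1 - r/4)" by (simp add: exp_add)
    also have "\<dots> \<le> exp (u\<^sup>2/4) / sqrt (1 - r/4)"
      using e1 k1 by (intro divide_right_mono) auto
    also have "\<dots> \<le> exp (u\<^sup>2/4) * exp (1/5)"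
      using s2 k1 by (simp add: divide_le_eq mult.assoc)
    finally show "exp (r*u\<^sup>2/8) * (exp ((r*u/4)\<^sup>2 / (2*(1-2*(r/8)))) / sqrt (1-2*(r/8))) \<le> exp (1/5) * exp (u\<^sup>2/4)"
      unfolding k by (simp add: mult.commute)
  qed
  finally show ?thesis .
qed

lemma sq_le_exp: "(x::real)\<^sup>2 \<le> 3 * exp (x\<^sup>2/8)"
proof -
  have "1 + (x\<^sup>2/8 - 1) \<le> exp (x\<^sup>2/8 - 1)" by (rule exp_ge_add_one_self)
  also have "\<dots> = exp (x\<^sup>2/8) / exp 1" by (simp add: exp_diff)
  finally have h: "x\<^sup>2/8 * exp 1 \<le> exp (x\<^sup>2/8)" by (simp add: le_divide_eq)
  have e0: "- (exp 1 - 5837465777 / 2147483648) \<le> (inverse(2 ^ 32)::real)"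
    using e_approx_32 by (rule abs_le_D2)
  have e: "8/3 \<le> exp (1::real)" using e0 by simp
  have "x\<^sup>2 * (8/3) \<le> x\<^sup>2 * exp 1" using e by (intro mult_left_mono) auto
  then show ?thesis using h by simp
qed

lemma L3:
  fixes r u :: real assumes r: "0 \<le> r" "r \<le> 1"
  shows "(\<integral>\<^sup>+x. ennreal (x\<^sup>2 * exp ((r/8)*(u+x)\<^sup>2)) \<partial>N) \<le> ennreal (5 * exp (u\<^sup>2/4))"
proof -
  have pt: "\<And>x. x\<^sup>2 * exp ((r/8)*(u+x)\<^sup>2) \<le> 3 * exp (r*u\<^sup>2/8) * exp (((1+r)/8)*x\<^sup>2 + (r*u/4)*x)"
  proof -
    fix x :: real
    have "x\<^sup>2 * exp ((r/8)*(u+x)\<^sup>2) \<le> 3 * exp (x\<^sup>2/8) * exp ((r/8)*(u+x)\<^sup>2)"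
      using sq_le_exp[of x] by (intro mult_right_mono) auto
    also have "\<dots> = 3 * exp (r*u\<^sup>2/8) * exp (((1+r)/8)*x\<^sup>2 + (r*u/4)*x)"
      by (simp add: mult.assoc exp_add[symmetric] power2_eq_square algebra_simps)
    finally show "x\<^sup>2 * exp ((r/8)*(u+x)\<^sup>2) \<le> 3 * exp (r*u\<^sup>2/8) * exp (((1+r)/8)*x\<^sup>2 + (r*u/4)*x)" .
  qed
  have "(\<integral>\<^sup>+x. ennreal (x\<^sup>2 * exp ((r/8)*(u+x)\<^sup>2)) \<partial>N) \<le> (\<integral>\<^sup>+x. ennreal (3 * exp (r*u\<^sup>2/8)) * ennreal (exp (((1+r)/8)*x\<^sup>2 + (r*u/4)*x)) \<partial>N)"
    using pt by (intro nn_integral_mono) (auto simp: ennreal_mult[symmetric] intro!: ennreal_leI)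
  also have "\<dots> = ennreal (3 * exp (r*u\<^sup>2/8)) * (\<integral>\<^sup>+x. ennreal (exp (((1+r)/8)*x\<^sup>2 + (r*u/4)*x)) \<partial>N)"
    by (subst nn_integral_cmult) auto
  also have "\<dots> = ennreal (3 * exp (r*u\<^sup>2/8) * (exp ((r*u/4)\<^sup>2 / (2*(1-2*((1+r)/8)))) / sqrt (1-2*((1+r)/8))))"
    using r by (subst gauss) (auto simp: ennreal_mult[symmetric])
  also have "\<dots> \<le> ennreal (5 * exp (u\<^sup>2/4))"
  proof (rule ennreal_leI)
    have k: "1-2*((1+r)/8) = 1 - (1+r)/4" by simp
    have k1: "1/2 \<le> 1 - (1+r)/4" using r by simp
    have a: "(r*u/4)\<^sup>2 \<le> u\<^sup>2/16" using r
      by (simp add: power_mult_distrib power_divide) (metis mult_left_le_one_le power_le_one zero_le_power2 mult.commute)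
    have b: "(r*u/4)\<^sup>2 / (2*(1 - (1+r)/4)) \<le> (u\<^sup>2/16) / 1"
      using a k1 by (intro frac_le) auto
    have c: "r*u\<^sup>2/8 \<le> u\<^sup>2/8" using r by (simp add: mult_left_le_one_le)
    have e1: "r*u\<^sup>2/8 + (r*u/4)\<^sup>2 / (2*(1 - (1+r)/4)) \<le> u\<^sup>2/4"
    proof -
      have b': "(r*u/4)\<^sup>2 / (2*(1 - (1+r)/4)) \<le> u\<^sup>2/16" using b by simp
      show ?thesis using b' c zero_le_power2[of u] by linarith
    qed
    have s: "sqrt (1/2) \<le> sqrt (1 - (1+r)/4)" using k1 by simp
    have s0: "1 \<le> (5/3) * sqrt (1/2::real)"
    proof (rule power2_le_imp_le)
      have "((5/3) * sqrt (1/2::real))\<^sup>2 = 25/18" unfolding power_mult_distrib by (simp add: power2_eq_square)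
      then show "1\<^sup>2 \<le> ((5/3) * sqrt (1/2::real))\<^sup>2" by simp
    qed simp
    have s2: "1 \<le> (5/3) * sqrt (1 - (1+r)/4)"
      using s0 s by linarith
    have "3 * exp (r*u\<^sup>2/8) * (exp ((r*u/4)\<^sup>2 / (2*(1 - (1+r)/4))) / sqrt (1 - (1+r)/4))
        = 3 * (exp (r*u\<^sup>2/8 + (r*u/4)\<^sup>2 / (2*(1 - (1+r)/4))) / sqrt (1 - (1+r)/4))" by (simp add: exp_add)
    also have "\<dots> \<le> 3 * (exp (u\<^sup>2/4) / sqrt (1 - (1+r)/4))"
      using e1 k1 by (intro mult_left_mono divide_right_mono) auto
    also have "\<dots> \<le> 3 * (exp (u\<^sup>2/4) * (5/3))"
      using s2 k1 by (intro mult_left_mono) (auto simp: divide_le_eq mult.assoc mult.commute[of "5/3"] intro: mult_left_mono[of 1, simplified])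
    finally show "3 * exp (r*u\<^sup>2/8) * (exp ((r*u/4)\<^sup>2 / (2*(1-2*((1+r)/8)))) / sqrt (1-2*((1+r)/8))) \<le> 5 * exp (u\<^sup>2/4)"
      unfolding k by simp
  qed
  finally show ?thesis .
qed

lemma L4: "(\<integral>\<^sup>+x. ennreal (x\<^sup>2) \<partial>N) = 1"
proof -
  have "(\<integral>\<^sup>+x. ennreal (x\<^sup>2) \<partial>N) = (\<integral>\<^sup>+x. ennreal (std_normal_density x * x^(2*1)) \<partial>lborel)"
    by (subst nn_integral_density) (auto simp: ennreal_mult[symmetric])
  also have "\<dots> = ennreal (fact (2 * 1) / (2^1 * fact 1))"
    using integral_std_normal_moment_even[of 1]
    by (subst nn_integral_eq_integral) (auto intro: integrable_std_normal_moment)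
  finally show ?thesis by simp
qed


locale S =
  fixes lam th eta :: "nat \<Rightarrow> real" and tau :: "real \<Rightarrow> nat \<Rightarrow> real" and d C L eps :: real
  assumes lam_bdd: "bounded (range lam)"
    and lam_nz: "\<And>j. j \<ge> 1 \<Longrightarrow> lam j \<noteq> 0"
    and diff_l2: "summable (\<lambda>j. (th (Suc j) - eta (Suc j))\<^sup>2)"
    and tau_pos: "\<And>j. j \<ge> 1 \<Longrightarrow> tau eps j > 0"
    and A: "assumptionA lam tau d" and E: "assumptionE lam C L"
    and eps: "0 < eps" "eps < 1"
    and mc_le: "mcirc lam th eta eps \<le> Gdim lam eps"
begin

abbreviation "G \<equiv> Gdim lam eps"
abbreviation "mc \<equiv> mcirc lam th eta eps"
abbreviation "Lm \<equiv> Lam lam"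
abbreviation "Phc \<equiv> Phicirc lam th eta eps"
abbreviation "Ph \<equiv> Phi lam th eta eps"
abbreviation "bs \<equiv> bias th eta"
abbreviation "dl j \<equiv> (th j - eta j)\<^sup>2"

lemma d_pos: "d > 0" and C1: "C \<ge> 1" and L1': "L \<ge> 1"
  using A E by (auto simp: assumptionA_def assumptionE_def)

lemma Lam_pos: "j \<ge> 1 \<Longrightarrow> Lm j > 0"
  using lam_nz by (simp add: Lam_def)

lemma lam2: "j \<ge> 1 \<Longrightarrow> (lam j)\<^sup>2 = 1 / Lm j"
  using lam_nz by (simp add: Lam_def)

lemma Lmax_ge: "1 \<le> j \<Longrightarrow> j \<le> m \<Longrightarrow> Lm j \<le> Lmax lam m"
  unfolding Lmax_def by (rule Max_ge) auto

lemma Lmax_in: "1 \<le> m \<Longrightarrow> \<exists>i\<in>{1..m}. Lmax lam m = Lm i"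
proof -
  assume "1 \<le> m"
  then have "Max (Lm ` {1..m}) \<in> Lm ` {1..m}" by (intro Max_in) auto
  then show ?thesis unfolding Lmax_def by auto
qed

lemma Lmax_pos: "1 \<le> m \<Longrightarrow> Lmax lam m > 0"
  using Lmax_ge[of 1 m] Lam_pos[of 1] by simp

lemma Lmax_mono: "1 \<le> m \<Longrightarrow> m \<le> n \<Longrightarrow> Lmax lam m \<le> Lmax lam n"
  using Lmax_in[of m] Lmax_ge[of _ n] by auto

definition "GS = {m \<in> {1..nat \<lfloor>1 / eps\<rfloor>}. eps * Lmax lam m \<le> Lm 1}"

lemma G_props: "1 \<le> G" "eps * Lmax lam G \<le> Lm 1"
proof -
  have "1 \<le> 1/eps" using eps by simp
  then have "1 \<le> nat \<lfloor>1/eps\<rfloor>" by linarith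
  moreover have "Lmax lam 1 = Lm 1" unfolding Lmax_def by simp
  moreover have "eps * Lm 1 \<le> Lm 1" using Lam_pos[of 1] eps by (simp add: mult_left_le_one_le)
  ultimately have "1 \<in> GS" unfolding GS_def using eps by simp
  then have "G \<in> GS" unfolding Gdim_def GS_def[symmetric] by (intro Max_in) (auto simp: GS_def)
  then show "1 \<le> G" "eps * Lmax lam G \<le> Lm 1" unfolding GS_def by auto
qed

lemma eps_Lam_le: "1 \<le> j \<Longrightarrow> j \<le> G \<Longrightarrow> eps * Lm j \<le> Lm 1"
proof -
  assume "1 \<le> j" "j \<le> G"
  then have "eps * Lm j \<le> eps * Lmax lam G" using Lmax_ge[of j G] eps by (intro mult_left_mono) auto
  then show ?thesis using G_props by linarith
qed

lemma Lbar_sum: "1 \<le> m \<Longrightarrow> real m * Lbar lam m = (\<Sum>j=1..m. Lm j)"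
  by (simp add: Lbar_def)

lemma dl_summable: "dl summable_on A"
proof -
  have "summable dl" using diff_l2 by (subst summable_Suc_iff[symmetric]) simp
  then have "dl summable_on UNIV" by (rule summable_nonneg_imp_summable_on) simp
  then show ?thesis by (rule summable_on_subset) simp
qed

lemma bias_nonneg: "0 \<le> bs m"
  unfolding bias_def by (rule infsum_nonneg) simp

lemma bias_split: "m \<le> k \<Longrightarrow> bs m = (\<Sum>j\<in>{m<..k}. dl j) + bs k"
proof -
  assume mk: "m \<le> k"
  have "{m<..} = {m<..k} \<union> {k<..}" using mk by auto
  then have "bs m = infsum dl ({m<..k} \<union> {k<..})" by (simp add: bias_def)
  also have "\<dots> = infsum dl {m<..k} + infsum dl {k<..}"
    by (rule infsum_Un_disjoint) (auto intro: dl_summable)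
  finally show ?thesis by (simp add: bias_def)
qed

lemma total_split: "(\<Sum>\<^sub>\<infinity> j\<in>{1..}. (eta j - th j)\<^sup>2) = (\<Sum>j=1..m. dl j) + bs m"
proof -
  have eq: "(\<lambda>j. (eta j - th j)\<^sup>2) = dl" by (auto simp: power2_commute)
  have "{1..} = {1..m} \<union> {m<..}" by auto
  then have "infsum dl {1..} = infsum dl ({1..m} \<union> {m<..})" by simp
  also have "\<dots> = infsum dl {1..m} + infsum dl {m<..}"
    by (rule infsum_Un_disjoint) (auto intro: dl_summable)
  finally show ?thesis by (simp add: bias_def eq)
qed

lemma tail_G: "(\<Sum>\<^sub>\<infinity> j\<in>{G<..}. (eta j - th j)\<^sup>2) = bs G"
  by (simp add: bias_def power2_commute)

lemma lam_bound: "\<exists>B>0. \<forall>j. \<bar>lam j\<bar> \<le> B"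
  using lam_bdd unfolding bounded_pos by auto

lemma Phi_ge: "1 \<le> m \<Longrightarrow> eps * (\<Sum>j=1..m. Lm j) \<le> Ph m" "bs m \<le> Ph m"
  by (auto simp: Phi_def Lbar_sum mult.assoc)

lemma Phi_min_ex: "\<exists>m. 1 \<le> m \<and> (\<forall>k\<ge>1. Ph m \<le> Ph k)"
proof -
  obtain B where B: "B > 0" "\<And>j. \<bar>lam j\<bar> \<le> B" using lam_bound by auto
  have LB: "1 / B\<^sup>2 \<le> Lm j" if "j \<ge> 1" for j
  proof -
    have "(lam j)\<^sup>2 \<le> B\<^sup>2" using B(2)[of j] by (metis abs_ge_zero power2_abs power_mono)
    moreover have "(lam j)\<^sup>2 > 0" using lam_nz that by simp
    ultimately show ?thesis using B(1) unfolding Lam_def by (intro divide_left_mono) auto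
  qed
  define N where "N = nat \<lceil>Ph 1 * B\<^sup>2 / eps\<rceil> + 1"
  have N1: "1 \<le> N" by (simp add: N_def)
  define S where "S = Ph ` {1..N}"
  have "Min S \<in> S" unfolding S_def using N1 by (intro Min_in) auto
  then obtain m0 where m0: "m0 \<in> {1..N}" "Ph m0 = Min S" unfolding S_def by auto
  have "Ph m0 \<le> Ph k" if k: "k \<ge> 1" for k
  proof (cases "k \<le> N")
    case True then show ?thesis using m0 k unfolding S_def by auto
  next
    case False
    have "Ph m0 \<le> Ph 1" using m0 N1 unfolding S_def by auto
    also have "Ph 1 \<le> eps * (real N / B\<^sup>2)"
    proof -
      have "Ph 1 * B\<^sup>2 / eps \<le> real N" unfolding N_def by linarith
      then show ?thesis using eps B by (simp add: field_simps)
    qed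
    also have "\<dots> \<le> eps * (\<Sum>j=1..k. 1 / B\<^sup>2)" using False eps by (simp add: divide_right_mono)
    also have "\<dots> \<le> eps * (\<Sum>j=1..k. Lm j)" using LB eps by (intro mult_left_mono sum_mono) auto
    also have "\<dots> \<le> Ph k" using Phi_ge k by simp
    finally show ?thesis .
  qed
  then show ?thesis using m0 by auto
qed

lemma mc_props: "1 \<le> mc" "\<And>k. 1 \<le> k \<Longrightarrow> Ph mc \<le> Ph k"
  using LeastI_ex[OF Phi_min_ex] unfolding mcirc_def by auto

lemma Phc_eq: "Phc = Ph mc"
  unfolding Phicirc_def
  by (rule cInf_eq_minimum) (use mc_props in auto)

lemma Phc_pos: "Phc > 0"
proof -
  have "eps * (\<Sum>j=1..mc. Lm j) > 0" using eps mc_props Lam_pos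
    by (intro mult_pos_pos sum_pos) auto
  then show ?thesis using Phi_ge(1)[of mc] mc_props Phc_eq by simp
qed

lemma bias_mc: "bs mc \<le> Phc" using Phi_ge(2) Phc_eq by simp

definition "K = Phc / (eps * Lmax lam mc)"

lemma K_pos: "K > 0" unfolding K_def using Phc_pos eps Lmax_pos mc_props by simp

lemma mc_le_LK: "real mc \<le> L * K"
proof -
  have E3: "Lmax lam mc / Lbar lam mc \<le> L" using E mc_props by (auto simp: assumptionE_def)
  have "(\<Sum>j=1..mc. Lm j) > 0" using mc_props Lam_pos by (intro sum_pos) auto
  then have Lb: "Lbar lam mc > 0" using mc_props unfolding Lbar_def by simp
  have "Lmax lam mc \<le> L * Lbar lam mc" using E3 Lb by (simp add: divide_le_eq)
  then have "(eps * mc) * Lmax lam mc \<le> (eps * mc) * (L * Lbar lam mc)"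
    using eps by (intro mult_left_mono) auto
  then have "eps * mc * Lmax lam mc \<le> L * (eps * mc * Lbar lam mc)"
    by (simp add: algebra_simps)
  also have "\<dots> \<le> L * Phc" using Phc_eq L1' by (intro mult_left_mono) (auto simp: Phi_def)
  finally have "eps * mc * Lmax lam mc \<le> L * Phc" .
  then show ?thesis unfolding K_def using eps Lmax_pos[of mc] mc_props
    by (simp add: field_simps)
qed
end

context S begin

abbreviation "mm \<equiv> mminus lam th eta C L d eps"
abbreviation "mp \<equiv> mplus lam th eta L eps"
definition "Tm = 8*L*C*(1+1/d)*Phc"

lemma Tm_ge: "Phc \<le> Tm"
proof -
  have "1*1 \<le> L*C" by (rule mult_mono) (use L1' C1 in auto)
  moreover have "1 \<le> 1+1/d" using d_pos by simp
  ultimately have "1*1 \<le> (8*(L*C))*(1+1/d)" by (intro mult_mono) auto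
  then have "1 * Phc \<le> ((8*(L*C))*(1+1/d)) * Phc" using Phc_pos by (intro mult_right_mono) auto
  then show ?thesis unfolding Tm_def by (simp add: mult.assoc)
qed

definition "Sm = {m \<in> {1..mc}. bs m \<le> Tm}"

lemma mm_props: "1 \<le> mm" "mm \<le> mc" "\<And>m. 1 \<le> m \<Longrightarrow> m < mm \<Longrightarrow> Tm < bs m"
proof -
  have eq: "mm = Min Sm" unfolding mminus_def Sm_def Tm_def by simp
  have mcS: "mc \<in> Sm" unfolding Sm_def using mc_props bias_mc Tm_ge by auto
  have fin: "finite Sm" unfolding Sm_def by simp
  have "mm \<in> Sm" unfolding eq using mcS fin by (intro Min_in) auto
  then show "1 \<le> mm" "mm \<le> mc" unfolding Sm_def by auto
  fix m assume m: "1 \<le> m" "m < mm"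
  show "Tm < bs m"
  proof (rule ccontr)
    assume "\<not> Tm < bs m"
    then have "m \<in> Sm" unfolding Sm_def using m \<open>mm \<le> mc\<close> by auto
    then have "mm \<le> m" unfolding eq using fin by simp
    then show False using m by simp
  qed
qed

definition "Sp = {m \<in> {mc..G}. real m \<le> 5 * L * Phc / (eps * Lmax lam mc)}"

lemma mp_props: "mc \<le> mp" "mp \<le> G" "\<And>m. mp < m \<Longrightarrow> m \<le> G \<Longrightarrow> 5 * L * K < real m"
proof -
  have eq: "mp = Max Sp" unfolding mplus_def Sp_def by simp
  have fK: "5 * L * Phc / (eps * Lmax lam mc) = 5 * L * K" unfolding K_def by simp
  have "0 \<le> L * K" using K_pos L1' by simp
  then have "real mc \<le> 5 * L * K" using mc_le_LK by linarith
  then have mcS: "mc \<in> Sp" unfolding Sp_def fK using mc_le by auto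
  have fin: "finite Sp" unfolding Sp_def by simp
  have "mp \<in> Sp" unfolding eq using mcS fin by (intro Max_in) auto
  then show "mc \<le> mp" "mp \<le> G" unfolding Sp_def by auto
  fix m assume m: "mp < m" "m \<le> G"
  show "5 * L * K < real m"
  proof (rule ccontr)
    assume "\<not> 5 * L * K < real m"
    then have "m \<in> Sp" unfolding Sp_def fK using m \<open>mc \<le> mp\<close> by auto
    then have "m \<le> mp" unfolding eq using fin by simp
    then show False using m by simp
  qed
qed

lemma lam_tail: "mc < j \<Longrightarrow> (lam j)\<^sup>2 \<le> C / Lmax lam mc"
proof -
  assume j: "mc < j"
  obtain B where B: "B > 0" "\<And>j. \<bar>lam j\<bar> \<le> B" using lam_bound by auto
  have E1: "(SUP j\<in>{mc<..}. (lam j)\<^sup>2) \<le> C * (MIN j\<in>{1..mc}. (lam j)\<^sup>2)"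
    using E mc_props by (auto simp: assumptionE_def)
  have bdd: "bdd_above ((\<lambda>j. (lam j)\<^sup>2) ` {mc<..})"
  proof (rule bdd_aboveI[of _ "B\<^sup>2"])
    fix x assume "x \<in> (\<lambda>j. (lam j)\<^sup>2) ` {mc<..}"
    then obtain i where "x = (lam i)\<^sup>2" by auto
    then show "x \<le> B\<^sup>2" using B(2)[of i] by (metis abs_ge_zero power2_abs power_mono)
  qed
  have "(lam j)\<^sup>2 \<le> (SUP j\<in>{mc<..}. (lam j)\<^sup>2)" using j bdd by (intro cSUP_upper) auto
  also have "\<dots> \<le> C * (MIN j\<in>{1..mc}. (lam j)\<^sup>2)" by (rule E1)
  also have "\<dots> \<le> C / Lmax lam mc"
  proof -
    obtain i where i: "i \<in> {1..mc}" "Lmax lam mc = Lm i" using Lmax_in mc_props by blast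
    have "(MIN j\<in>{1..mc}. (lam j)\<^sup>2) \<le> (lam i)\<^sup>2" using i by (intro Min_le) auto
    also have "\<dots> = 1 / Lmax lam mc" using i lam2 by simp
    finally show ?thesis using C1 by (simp add: mult_left_mono divide_inverse)
  qed
  finally show ?thesis .
qed

lemma lam_head: "1 \<le> j \<Longrightarrow> j \<le> mc \<Longrightarrow> 1 / Lmax lam mc \<le> (lam j)\<^sup>2"
  using lam2 Lmax_ge[of j mc] Lam_pos[of j] by (simp add: frac_le)

abbreviation "sg j \<equiv> sig lam tau eps j"
definition "r j = sg j * (lam j)\<^sup>2 / eps"
definition "u j = lam j * (th j - eta j) / sqrt eps"

lemma sig_alt: "j \<ge> 1 \<Longrightarrow> sg j = 1 / ((lam j)\<^sup>2/eps + 1/tau eps j)"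
  by (simp add: sig_def)

lemma sig_pos: "j \<ge> 1 \<Longrightarrow> sg j > 0"
  using lam_nz tau_pos eps by (simp add: sig_def add_pos_pos)

lemma sig_le: "j \<ge> 1 \<Longrightarrow> sg j \<le> eps * Lm j"
proof -
  assume j: "j \<ge> 1"
  define a where "a = (lam j)\<^sup>2/eps"
  define b where "b = 1/tau eps j"
  have a: "a > 0" using lam_nz j eps by (simp add: a_def)
  have b: "b > 0" using tau_pos j by (simp add: b_def)
  have "sg j = 1/(a+b)" unfolding sig_def a_def b_def by simp
  also have "\<dots> \<le> 1 / a" using a b by (intro divide_left_mono) auto
  finally show ?thesis by (simp add: Lam_def a_def)
qed

lemma r_bounds: "j \<ge> 1 \<Longrightarrow> 0 < r j \<and> r j \<le> 1"
proof -
  assume j: "j \<ge> 1"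
  define a where "a = (lam j)\<^sup>2/eps"
  define b where "b = 1/tau eps j"
  have a: "a > 0" using lam_nz j eps by (simp add: a_def)
  have b: "b > 0" using tau_pos j by (simp add: b_def)
  have "r j = a / (a + b)" unfolding r_def sig_def a_def b_def by simp
  moreover have "0 < a / (a + b)" using a b by simp
  moreover have "a / (a + b) \<le> 1" using a b by simp
  ultimately show ?thesis by simp
qed

lemma A_j: "1 \<le> j \<Longrightarrow> j \<le> G \<Longrightarrow> d * max (sqrt eps * sqrt (Lm j)) (eps * Lm j) \<le> tau eps j"
  using A eps unfolding assumptionA_def by auto

lemma r_lower: "1 \<le> j \<Longrightarrow> j \<le> G \<Longrightarrow> d / (1 + d) \<le> r j"
proof -
  assume j: "1 \<le> j" "j \<le> G"
  define a where "a = (lam j)\<^sup>2/eps"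
  define b where "b = 1/tau eps j"
  have a: "a > 0" using lam_nz j eps by (simp add: a_def)
  have b: "b > 0" using tau_pos j by (simp add: b_def)
  have "d * (eps * Lm j) \<le> d * max (sqrt eps * sqrt (Lm j)) (eps * Lm j)" using d_pos by (intro mult_left_mono) auto
  then have t: "d * (eps * Lm j) \<le> tau eps j" using A_j[OF j] by linarith
  have "d * b \<le> a"
  proof -
    have "d * eps / (lam j)\<^sup>2 \<le> tau eps j" using t by (simp add: Lam_def)
    then have "d * eps \<le> tau eps j * (lam j)\<^sup>2" using lam_nz j by (simp add: divide_le_eq)
    then show ?thesis unfolding a_def b_def using tau_pos[of j] j eps by (simp add: field_simps)
  qed
  have "r j = a / (a + b)" unfolding r_def sig_def a_def b_def by simp
  moreover have "d / (1 + d) \<le> a / (a + b)" using a b d_pos \<open>d * b \<le> a\<close> by (simp add: field_simps)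
  ultimately show ?thesis by simp
qed

lemma q_bound: "1 \<le> j \<Longrightarrow> j \<le> G \<Longrightarrow> (sg j / tau eps j)\<^sup>2 \<le> eps * Lm j / d\<^sup>2"
proof -
  assume j: "1 \<le> j" "j \<le> G"
  define a where "a = (lam j)\<^sup>2/eps"
  define b where "b = 1/tau eps j"
  have a: "a > 0" using lam_nz j eps by (simp add: a_def)
  have b: "b > 0" using tau_pos j by (simp add: b_def)
  have el: "eps * Lm j > 0" using eps Lam_pos j by simp
  have "d * sqrt (eps * Lm j) \<le> d * max (sqrt eps * sqrt (Lm j)) (eps * Lm j)" using d_pos
    by (intro mult_left_mono) (auto simp: real_sqrt_mult)
  then have t: "d * sqrt (eps * Lm j) \<le> tau eps j" using A_j[OF j] by linarith
  have q: "sg j / tau eps j = b / (a + b)" unfolding sig_def a_def b_def by simp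
  have "b / (a + b) \<le> b / a" using a b by (intro divide_left_mono) auto
  also have "b / a = eps * Lm j / tau eps j" unfolding a_def b_def Lam_def by simp
  also have "\<dots> \<le> eps * Lm j / (d * sqrt (eps * Lm j))"
    using t el d_pos tau_pos[of j] j by (intro divide_left_mono) (auto intro!: mult_pos_pos)
  also have "\<dots> = sqrt (eps * Lm j) / d" using el d_pos
    by (metis (no_types, lifting) divide_divide_eq_left mult.commute real_div_sqrt less_le)
  finally have "sg j / tau eps j \<le> sqrt (eps * Lm j) / d" using q by simp
  moreover have "0 \<le> sg j / tau eps j" using sig_pos[of j] tau_pos[of j] j by simp
  ultimately have "(sg j / tau eps j)\<^sup>2 \<le> (sqrt (eps * Lm j) / d)\<^sup>2" by (rule power_mono)
  also have "\<dots> = eps * Lm j / d\<^sup>2" using el by (simp add: power_divide)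
  finally show ?thesis .
qed

lemma Zid: "j \<ge> 1 \<Longrightarrow> (thetaY lam tau eta eps (obs lam th eps xi) j - eta j)\<^sup>2 / sg j = r j * (u j + xi j)\<^sup>2"
proof -
  assume j: "j \<ge> 1"
  have sp: "sg j > 0" using sig_pos j .
  have X: "(lam j)\<^sup>2/eps + 1/tau eps j > 0" using lam_nz j eps tau_pos[of j] by (simp add: add_pos_pos)
  have inv: "sg j * ((lam j)\<^sup>2/eps + 1/tau eps j) = 1" using X unfolding sig_def by simp
  have "thetaY lam tau eta eps (obs lam th eps xi) j - eta j
      = sg j * (eta j / tau eps j + lam j * (lam j * th j + sqrt eps * xi j) / eps) - sg j * ((lam j)\<^sup>2/eps + 1/tau eps j) * eta j"
    unfolding thetaY_def obs_def inv by simp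
  also have "\<dots> = sg j * lam j * (lam j * (th j - eta j) + sqrt eps * xi j) / eps"
    using eps by (simp add: field_simps power2_eq_square)
  finally have t: "thetaY lam tau eta eps (obs lam th eps xi) j - eta j = sg j * lam j * (lam j * (th j - eta j) + sqrt eps * xi j) / eps" .
  have se: "sqrt eps * sqrt eps = eps" using eps by simp
  have "u j + xi j = (lam j * (th j - eta j) + sqrt eps * xi j) / sqrt eps"
    unfolding u_def using eps by (simp add: field_simps)
  then have "r j * (u j + xi j)\<^sup>2 = sg j * (lam j)\<^sup>2 / eps * (lam j * (th j - eta j) + sqrt eps * xi j)\<^sup>2 / eps"
    unfolding r_def using eps by (simp add: power_divide)
  also have "\<dots> = (sg j * lam j * (lam j * (th j - eta j) + sqrt eps * xi j) / eps)\<^sup>2 / sg j"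
    using sp eps by (simp add: field_simps power2_eq_square)
  finally show ?thesis unfolding t by simp
qed

end

context S begin

definition "Q xi j = r j * (u j + xi j)\<^sup>2"
definition "W xi k = (\<Sum>j=1..k. Q xi j)/2 - 3*C*real k/2"
abbreviation "PM xi m \<equiv> postM lam tau eta C eps (obs lam th eps xi) m"

lemma postw_eq: "postw lam tau eta C eps (obs lam th eps xi) k = exp (W xi k)"
  unfolding postw_def W_def Q_def
  by (rule arg_cong[where f=exp]) (simp add: Zid)

lemma PM_eq: "PM xi m = exp (W xi m) / (\<Sum>k=1..G. exp (W xi k))"
  unfolding postM_def postw_eq ..

lemma Ssum_ge: "k \<in> {1..G} \<Longrightarrow> exp (W xi k) \<le> (\<Sum>k=1..G. exp (W xi k))"
  by (rule member_le_sum) auto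

lemma Ssum_pos: "0 < (\<Sum>k=1..G. exp (W xi k))"
  using G_props by (intro sum_pos) auto

lemma PM_nonneg: "0 \<le> PM xi m"
  unfolding PM_eq using Ssum_pos[of xi] by simp

lemma PM_sum: "(\<Sum>m=1..G. PM xi m) = 1"
  unfolding PM_eq using Ssum_pos[of xi] by (simp add: sum_divide_distrib[symmetric])

lemma PM_le1: "m \<in> {1..G} \<Longrightarrow> PM xi m \<le> 1"
  unfolding PM_eq using Ssum_pos[of xi] Ssum_ge[of m xi] by simp

lemma PM_ratio:
  assumes m: "m \<in> {1..G}" and k: "k \<in> {1..G}" and s: "0 < s" "s \<le> 1"
  shows "PM xi m \<le> exp (s * (W xi m - W xi k))"
proof (cases "W xi m \<le> W xi k")
  case True
  have "PM xi m \<le> exp (W xi m) / exp (W xi k)"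
    unfolding PM_eq using Ssum_ge[OF k, of xi] Ssum_pos[of xi] by (intro divide_left_mono) (auto intro: mult_pos_pos)
  also have "\<dots> = exp (W xi m - W xi k)" by (simp add: exp_diff)
  also have "\<dots> \<le> exp (s * (W xi m - W xi k))"
  proof -
    have "(1 - s) * (W xi m - W xi k) \<le> 0" using True s by (intro mult_nonneg_nonpos) auto
    then show ?thesis by (simp add: algebra_simps)
  qed
  finally show ?thesis .
next
  case False
  have "PM xi m \<le> 1" using PM_le1[OF m] .
  also have "1 \<le> exp (s * (W xi m - W xi k))" using False s by simp
  finally show ?thesis .
qed

lemma sum_split1: "(a::nat) \<le> b \<Longrightarrow> (\<Sum>j=1..b. f j) = (\<Sum>j=1..a. f j) + (\<Sum>j\<in>{a<..b}. (f j::real))"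
proof -
  assume ab: "a \<le> b"
  have "{1..b} = {1..a} \<union> {a<..b}" using ab by auto
  then show ?thesis by (simp add: sum.union_disjoint[symmetric] ivl_disj_int)
qed

lemma W_diff: "k \<le> m \<Longrightarrow> W xi m - W xi k = (\<Sum>j\<in>{k<..m}. Q xi j)/2 - 3*C*(real m - real k)/2"
  unfolding W_def by (subst sum_split1[of k m]) (simp_all add: field_simps)

lemma LT_det:
  assumes m: "1 \<le> m" "m < mm"
  shows "3*C*(real mc - real m)/2 - (\<Sum>j\<in>{m<..mc}. r j * (u j)\<^sup>2)/4 \<le> - real mc / 5"
proof -
  define J where "J = {m<..mc}"
  have mmc: "m \<le> mc" using m mm_props by simp
  define D where "D = d/(1+d)"
  have D: "0 < D" "D \<le> 1" using d_pos by (auto simp: D_def)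
  have Lp: "Lmax lam mc > 0" using Lmax_pos mc_props by simp
  have s1: "D * (\<Sum>j\<in>J. (u j)\<^sup>2) \<le> (\<Sum>j\<in>J. r j * (u j)\<^sup>2)"
    unfolding sum_distrib_left
  proof (rule sum_mono)
    fix j assume j: "j \<in> J"
    then have "1 \<le> j" "j \<le> G" using m mc_le by (auto simp: J_def)
    then show "D * (u j)\<^sup>2 \<le> r j * (u j)\<^sup>2" using r_lower unfolding D_def by (intro mult_right_mono) auto
  qed
  have s2: "(\<Sum>j\<in>J. dl j) / (eps * Lmax lam mc) \<le> (\<Sum>j\<in>J. (u j)\<^sup>2)"
    unfolding sum_divide_distrib
  proof (rule sum_mono)
    fix j assume j: "j \<in> J"
    then have j1: "1 \<le> j" "j \<le> mc" using m by (auto simp: J_def)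
    have "dl j / (eps * Lmax lam mc) = (1 / Lmax lam mc) * dl j / eps" by simp
    also have "\<dots> \<le> (lam j)\<^sup>2 * dl j / eps" using lam_head[OF j1] eps
      by (intro divide_right_mono mult_right_mono) auto
    also have "\<dots> = (u j)\<^sup>2" unfolding u_def using eps by (simp add: power_mult_distrib power_divide)
    finally show "dl j / (eps * Lmax lam mc) \<le> (u j)\<^sup>2" .
  qed
  have s3: "(\<Sum>j\<in>J. dl j) = bs m - bs mc" using bias_split[OF mmc] by (simp add: J_def)
  have s4: "Tm - Phc \<le> bs m - bs mc" using mm_props(3)[OF m] bias_mc by simp
  have D1: "D * (1+1/d) = 1" unfolding D_def using d_pos
    by (simp add: field_simps) (metis add_pos_pos less_irrefl mult_pos_pos)
  have "D * Tm = (D * (1+1/d)) * (8*L*C*Phc)" unfolding Tm_def by (simp add: algebra_simps)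
  then have TmD: "D * Tm = 8*L*C*Phc" using D1 by simp
  have s5: "(8*L*C - 1) * Phc \<le> D * (Tm - Phc)"
  proof -
    have "D * Phc \<le> Phc" using D Phc_pos by (simp add: mult_left_le_one_le)
    then show ?thesis using TmD by (simp add: algebra_simps)
  qed
  have "(8*L*C - 1) * K = (8*L*C - 1) * Phc / (eps * Lmax lam mc)" unfolding K_def by simp
  also have "\<dots> \<le> D * (Tm - Phc) / (eps * Lmax lam mc)" using s5 eps Lp by (intro divide_right_mono) auto
  also have "\<dots> \<le> D * ((\<Sum>j\<in>J. dl j) / (eps * Lmax lam mc))"
    using s3 s4 D eps Lp by (simp add: divide_right_mono mult_left_mono)
  also have "\<dots> \<le> D * (\<Sum>j\<in>J. (u j)\<^sup>2)" using s2 D by (intro mult_left_mono) auto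
  also have "\<dots> \<le> (\<Sum>j\<in>J. r j * (u j)\<^sup>2)" by (rule s1)
  finally have X: "(8*L*C - 1) * K \<le> (\<Sum>j\<in>J. r j * (u j)\<^sup>2)" .
  have LC: "1 \<le> L*C" using L1' C1 by (metis mult_mono' mult_1 zero_le_one order_trans)
  have KLCK: "K \<le> L*C*K" using LC K_pos by simp
  have mcLCK: "real mc \<le> L*C*K"
  proof -
    have "L*K \<le> L*C*K" using C1 K_pos L1' by simp
    then show ?thesis using mc_le_LK by simp
  qed
  have CmcLCK: "C * real mc \<le> C * (L*K)" using mc_le_LK C1 by (intro mult_left_mono) auto
  define P where "P = L*C*K"
  have h1: "C * real mc \<le> P" using CmcLCK by (simp add: P_def algebra_simps)
  have X': "8*P - K \<le> (\<Sum>j\<in>J. r j * (u j)\<^sup>2)" using X by (simp add: P_def algebra_simps)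
  have Cm: "0 \<le> C * real m" using C1 by simp
  have e1: "3*C*(real mc - real m)/2 = 3/2 * (C * real mc) - 3/2 * (C * real m)" by (simp add: field_simps)
  have "3*C*(real mc - real m)/2 - (\<Sum>j\<in>J. r j * (u j)\<^sup>2)/4 \<le> - real mc / 5"
    unfolding e1 using X' KLCK mcLCK Cm h1 unfolding P_def[symmetric] by linarith
  then show ?thesis by (simp add: J_def)
qed

end

context S begin

lemma LT:
  assumes m: "1 \<le> m" "m < mm"
  shows "(\<integral>\<^sup>+xi. ennreal (PM xi m) \<partial>noise) \<le> ennreal (exp (- real mc / 5))"
proof -
  define J where "J = {m<..mc}"
  define c where "c = exp (3*C*(real mc - real m)/2)"
  have mmc: "m \<le> mc" using m mm_props by simp
  have min: "m \<in> {1..G}" "mc \<in> {1..G}" using m mmc mc_le mc_props by auto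
  have J1: "\<And>i. i \<in> J \<Longrightarrow> 1 \<le> i" using m by (auto simp: J_def)
  have pt: "PM xi m \<le> c * (\<Prod>i\<in>J. exp (-(r i/2)*(u i + xi i)\<^sup>2))" for xi
  proof -
    have "PM xi m \<le> exp (1 * (W xi m - W xi mc))" by (rule PM_ratio[OF min]) auto
    also have "W xi m - W xi mc = 3*C*(real mc - real m)/2 + (\<Sum>i\<in>J. -(r i/2)*(u i + xi i)\<^sup>2)"
      using W_diff[OF mmc, of xi] unfolding J_def Q_def
      by (simp add: sum_divide_distrib sum_negf field_simps)
    finally show ?thesis unfolding c_def by (simp add: exp_add exp_sum J_def)
  qed
  have "(\<integral>\<^sup>+xi. ennreal (PM xi m) \<partial>noise) \<le> (\<integral>\<^sup>+xi. ennreal c * (\<Prod>i\<in>J. ennreal (exp (-(r i/2)*(u i + xi i)\<^sup>2))) \<partial>noise)"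
  proof (rule nn_integral_mono)
    fix xi
    have "ennreal (PM xi m) \<le> ennreal (c * (\<Prod>i\<in>J. exp (-(r i/2)*(u i + xi i)\<^sup>2)))"
      using pt by (rule ennreal_leI)
    also have "\<dots> = ennreal c * ennreal (\<Prod>i\<in>J. exp (-(r i/2)*(u i + xi i)\<^sup>2))"
      by (rule ennreal_mult) (auto simp: c_def intro: prod_nonneg)
    also have "ennreal (\<Prod>i\<in>J. exp (-(r i/2)*(u i + xi i)\<^sup>2)) = (\<Prod>i\<in>J. ennreal (exp (-(r i/2)*(u i + xi i)\<^sup>2)))"
      by (rule prod_ennreal[symmetric]) auto
    finally show "ennreal (PM xi m) \<le> ennreal c * (\<Prod>i\<in>J. ennreal (exp (-(r i/2)*(u i + xi i)\<^sup>2)))" .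
  qed
  also have "\<dots> = ennreal c * (\<integral>\<^sup>+xi. (\<Prod>i\<in>J. ennreal (exp (-(r i/2)*(u i + xi i)\<^sup>2))) \<partial>noise)"
    by (rule nn_integral_cmult) (unfold noise_def, measurable)
  also have "(\<integral>\<^sup>+xi. (\<Prod>i\<in>J. ennreal (exp (-(r i/2)*(u i + xi i)\<^sup>2))) \<partial>noise)
      = (\<Prod>i\<in>J. \<integral>\<^sup>+x. ennreal (exp (-(r i/2)*(u i + x)\<^sup>2)) \<partial>N)"
    by (rule noise_prod) (auto simp: J_def)
  also have "\<dots> \<le> ennreal (\<Prod>i\<in>J. exp (-r i*(u i)\<^sup>2/4))"
    using r_bounds J1 by (intro prod_ennreal_le L1) (auto simp: J_def less_imp_le)
  also have "ennreal c * ennreal (\<Prod>i\<in>J. exp (-r i*(u i)\<^sup>2/4)) = ennreal (exp (3*C*(real mc - real m)/2 - (\<Sum>i\<in>J. r i * (u i)\<^sup>2)/4))"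
    unfolding c_def by (simp add: ennreal_mult[symmetric] exp_sum[symmetric] J_def exp_diff[symmetric] sum_divide_distrib sum_negf exp_add[symmetric])
  also have "\<dots> \<le> ennreal (exp (- real mc / 5))"
    using LT_det[OF m] unfolding J_def by (intro ennreal_leI) simp
  finally show ?thesis by (simp add: mult_left_mono)
qed

end

context S begin

lemma UT_det:
  assumes m: "mp < m" "m \<le> G"
  shows "-3*C*(real m - real mc)/8 + (real m - real mc)/5 + (\<Sum>j\<in>{mc<..m}. (u j)\<^sup>2)/4 \<le> - real mc / 5"
proof -
  have mcm: "mc \<le> m" using mp_props m by simp
  define n where "n = real m - real mc"
  have Lp: "Lmax lam mc > 0" using Lmax_pos mc_props by simp
  have s1: "(\<Sum>j\<in>{mc<..m}. (u j)\<^sup>2) \<le> (\<Sum>j\<in>{mc<..m}. C / (eps * Lmax lam mc) * dl j)"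
  proof (rule sum_mono)
    fix j assume j: "j \<in> {mc<..m}"
    have "(u j)\<^sup>2 = (lam j)\<^sup>2 * dl j / eps" unfolding u_def using eps by (simp add: power_mult_distrib power_divide)
    also have "\<dots> \<le> (C / Lmax lam mc) * dl j / eps" using lam_tail[of j] j eps
      by (intro divide_right_mono mult_right_mono) auto
    also have "\<dots> = C / (eps * Lmax lam mc) * dl j" by simp
    finally show "(u j)\<^sup>2 \<le> C / (eps * Lmax lam mc) * dl j" .
  qed
  have s2: "(\<Sum>j\<in>{mc<..m}. dl j) \<le> Phc" using bias_split[OF mcm] bias_nonneg[of m] bias_mc by simp
  have "(\<Sum>j\<in>{mc<..m}. C / (eps * Lmax lam mc) * dl j) = C / (eps * Lmax lam mc) * (\<Sum>j\<in>{mc<..m}. dl j)"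
    by (simp add: sum_distrib_left)
  also have "\<dots> \<le> C / (eps * Lmax lam mc) * Phc" using s2 C1 eps Lp by (intro mult_left_mono) auto
  also have "\<dots> = C * K" unfolding K_def by simp
  finally have U: "(\<Sum>j\<in>{mc<..m}. (u j)\<^sup>2) \<le> C * K" using s1 by simp
  have big: "5 * L * K < real m" using mp_props(3) m by simp
  have LK: "K \<le> L * K" using L1' K_pos by simp
  have n4K: "4 * K \<le> n" unfolding n_def using big mc_le_LK LK by linarith
  have n4mc: "4 * real mc \<le> n" unfolding n_def using big mc_le_LK LK by linarith
  have nC: "n \<le> C * n" using C1 n4K K_pos by (simp add: mult_le_cancel_right1)
  have CK: "C * K \<le> C * (n/4)" using n4K C1 by (intro mult_left_mono) auto
  have e1: "-3*C*(real m - real mc)/8 = -3/8 * (C * n)" unfolding n_def by (simp add: field_simps)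
  show ?thesis unfolding e1 n_def[symmetric] using U CK nC n4mc by (simp add: field_simps) linarith?
qed

lemma UT:
  assumes jm: "mp < j" "j \<le> m" "m \<le> G"
  shows "(\<integral>\<^sup>+xi. ennreal ((xi j)\<^sup>2 * PM xi m) \<partial>noise) \<le> ennreal (5 * exp (- real mc / 5))"
proof -
  define J where "J = {mc<..m}"
  define c where "c = exp (-3*C*(real m - real mc)/8)"
  define h where "h i x = (if i = j then x\<^sup>2 else 1) * exp ((r i/8)*(u i + x)\<^sup>2)" for i x
  define b where "b i = (if i = j then 5 else exp (1/5)) * exp ((u i)\<^sup>2/4)" for i
  have mcm: "mc \<le> m" using mp_props jm by simp
  have jJ: "j \<in> J" using mp_props jm by (auto simp: J_def)
  have min: "m \<in> {1..G}" "mc \<in> {1..G}" using jm mcm mc_le mc_props by auto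
  have J1: "\<And>i. i \<in> J \<Longrightarrow> 1 \<le> i" using mc_props by (auto simp: J_def)
  have finJ: "finite J" by (simp add: J_def)
  have h_nn: "0 \<le> h i x" for i x by (simp add: h_def)
  have pt: "(xi j)\<^sup>2 * PM xi m \<le> c * (\<Prod>i\<in>J. h i (xi i))" for xi
  proof -
    have "PM xi m \<le> exp ((1/4) * (W xi m - W xi mc))" by (rule PM_ratio[OF min]) auto
    also have "(1/4) * (W xi m - W xi mc) = -3*C*(real m - real mc)/8 + (\<Sum>i\<in>J. (r i/8)*(u i + xi i)\<^sup>2)"
    proof -
      define Sg where "Sg = (\<Sum>i\<in>J. (r i/8)*(u i + xi i)\<^sup>2)"
      have "(\<Sum>i\<in>J. Q xi i) = 8 * Sg" unfolding Sg_def Q_def sum_distrib_left by (rule sum.cong) auto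
      then have "W xi m - W xi mc = 8 * Sg / 2 - 3*C*(real m - real mc)/2"
        using W_diff[OF mcm, of xi] unfolding J_def by simp
      then show ?thesis unfolding Sg_def[symmetric] by (simp add: field_simps)
    qed
    also have "exp (-3*C*(real m - real mc)/8 + (\<Sum>i\<in>J. (r i/8)*(u i + xi i)\<^sup>2)) = c * (\<Prod>i\<in>J. exp ((r i/8)*(u i + xi i)\<^sup>2))"
      by (simp only: c_def exp_add exp_sum[OF finJ])
    finally have p1: "PM xi m \<le> c * (\<Prod>i\<in>J. exp ((r i/8)*(u i + xi i)\<^sup>2))" .
    have "(\<Prod>i\<in>J. h i (xi i)) = (\<Prod>i\<in>J. (if i = j then (xi i)\<^sup>2 else 1)) * (\<Prod>i\<in>J. exp ((r i/8)*(u i + xi i)\<^sup>2))"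
      unfolding h_def by (rule prod.distrib)
    also have "(\<Prod>i\<in>J. (if i = j then (xi i)\<^sup>2 else 1)) = (xi j)\<^sup>2" using jJ finJ by simp
    finally have p2: "(\<Prod>i\<in>J. h i (xi i)) = (xi j)\<^sup>2 * (\<Prod>i\<in>J. exp ((r i/8)*(u i + xi i)\<^sup>2))" .
    have "(xi j)\<^sup>2 * PM xi m \<le> (xi j)\<^sup>2 * (c * (\<Prod>i\<in>J. exp ((r i/8)*(u i + xi i)\<^sup>2)))"
      using p1 by (intro mult_left_mono) auto
    then show ?thesis unfolding p2 by (simp add: mult.left_commute)
  qed
  have "(\<integral>\<^sup>+xi. ennreal ((xi j)\<^sup>2 * PM xi m) \<partial>noise) \<le> (\<integral>\<^sup>+xi. ennreal c * (\<Prod>i\<in>J. ennreal (h i (xi i))) \<partial>noise)"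
  proof (rule nn_integral_mono)
    fix xi
    have "ennreal ((xi j)\<^sup>2 * PM xi m) \<le> ennreal (c * (\<Prod>i\<in>J. h i (xi i)))"
      using pt by (rule ennreal_leI)
    also have "\<dots> = ennreal c * ennreal (\<Prod>i\<in>J. h i (xi i))"
      by (rule ennreal_mult) (auto simp: c_def h_nn intro: prod_nonneg)
    also have "ennreal (\<Prod>i\<in>J. h i (xi i)) = (\<Prod>i\<in>J. ennreal (h i (xi i)))"
      by (rule prod_ennreal[symmetric]) (simp add: h_nn)
    finally show "ennreal ((xi j)\<^sup>2 * PM xi m) \<le> ennreal c * (\<Prod>i\<in>J. ennreal (h i (xi i)))" .
  qed
  also have "\<dots> = ennreal c * (\<integral>\<^sup>+xi. (\<Prod>i\<in>J. ennreal (h i (xi i))) \<partial>noise)"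
    by (rule nn_integral_cmult) (unfold noise_def h_def, measurable)
  also have "(\<integral>\<^sup>+xi. (\<Prod>i\<in>J. ennreal (h i (xi i))) \<partial>noise) = (\<Prod>i\<in>J. \<integral>\<^sup>+x. ennreal (h i x) \<partial>N)"
    by (rule noise_prod) (auto simp: J_def h_def)
  also have "\<dots> \<le> ennreal (\<Prod>i\<in>J. b i)"
  proof (rule prod_ennreal_le[OF finJ])
    fix i assume i: "i \<in> J"
    have r: "0 \<le> r i" "r i \<le> 1" using r_bounds[OF J1[OF i]] by auto
    show "(\<integral>\<^sup>+x. ennreal (h i x) \<partial>N) \<le> ennreal (b i)"
    proof (cases "i = j")
      case True then show ?thesis unfolding h_def b_def using L3[OF r] by simp
    next
      case False then show ?thesis unfolding h_def b_def using L2[OF r] by simp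
    qed
    show "0 \<le> b i" by (simp add: b_def)
  qed
  also have "ennreal c * ennreal (\<Prod>i\<in>J. b i) = ennreal (c * (\<Prod>i\<in>J. b i))"
    by (rule ennreal_mult[symmetric]) (auto simp: c_def b_def intro: prod_nonneg)
  also have "\<dots> \<le> ennreal (5 * exp (- real mc / 5))"
  proof (rule ennreal_leI)
    have pb: "(\<Prod>i\<in>J. b i) = (\<Prod>i\<in>J. (if i = j then 5 else exp (1/5))) * exp ((\<Sum>i\<in>J. (u i)\<^sup>2)/4)"
      unfolding b_def prod.distrib by (simp add: exp_sum finJ sum_divide_distrib)
    have "(\<Prod>i\<in>J. (if i = j then 5 else exp (1/5::real))) \<le> (\<Prod>i\<in>J. (if i = j then 5 else 1) * exp (1/5))"
      by (intro prod_mono) auto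
    also have "\<dots> = 5 * exp (1/5) ^ card J" using jJ finJ by (simp add: prod.distrib)
    also have "\<dots> = 5 * exp ((real m - real mc)/5)"
      using mcm by (simp add: J_def exp_of_nat_mult[symmetric] of_nat_diff)
    finally have pi: "(\<Prod>i\<in>J. (if i = j then 5 else exp (1/5::real))) \<le> 5 * exp ((real m - real mc)/5)" .
    have "c * (\<Prod>i\<in>J. b i) \<le> c * (5 * exp ((real m - real mc)/5) * exp ((\<Sum>i\<in>J. (u i)\<^sup>2)/4))"
      unfolding pb using pi by (intro mult_left_mono mult_right_mono) (auto simp: c_def)
    also have "\<dots> = 5 * exp (-3*C*(real m - real mc)/8 + (real m - real mc)/5 + (\<Sum>i\<in>J. (u i)\<^sup>2)/4)"
      unfolding c_def by (simp only: exp_add mult_ac)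
    also have "\<dots> \<le> 5 * exp (- real mc / 5)"
      using UT_det[of m] jm unfolding J_def by simp
    finally show "c * (\<Prod>i\<in>J. b i) \<le> 5 * exp (- real mc / 5)" .
  qed
  finally show ?thesis by (simp add: mult_left_mono)
qed

end


lemma integral_le_nn:
  fixes f :: "'a \<Rightarrow> real"
  assumes nn: "\<And>x. 0 \<le> f x" and le: "(\<integral>\<^sup>+x. ennreal (f x) \<partial>M) \<le> ennreal c" and c: "0 \<le> c"
  shows "integral\<^sup>L M f \<le> c"
proof (cases "f \<in> borel_measurable M")
  case True
  then have "integral\<^sup>L M f = enn2real (\<integral>\<^sup>+x. ennreal (f x) \<partial>M)"
    using nn by (intro integral_eq_nn_integral) auto
  also have "\<dots> \<le> c" using le c by (intro enn2real_leI) auto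
  finally show ?thesis .
next
  case False
  then have "\<not> integrable M f" using borel_measurable_integrable by blast
  then show ?thesis using c by (simp add: not_integrable_integral_eq)
qed

interpretation NP: prob_space noise
  unfolding noise_def by (rule prob_space_PiM) (rule prob_space_normal_density, simp)

lemma nn_xi2: "(\<integral>\<^sup>+xi. ennreal ((xi j)\<^sup>2) \<partial>noise) = 1"
  using noise_prod[of "{j}" "\<lambda>_ x. ennreal (x\<^sup>2)"] L4 by simp

context S begin

lemma meas_PM: "(\<lambda>xi. PM xi m) \<in> borel_measurable noise"
  unfolding postM_def postw_def thetaY_def obs_def noise_def by measurable

lemma meas_PM2: "(\<lambda>xi. (xi j)\<^sup>2 * PM xi m) \<in> borel_measurable noise"
  unfolding postM_def postw_def thetaY_def obs_def noise_def by measurable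

lemma B_bounds: "0 \<le> (\<Sum>m=j..G. PM xi m)" "(\<Sum>m=j..G. PM xi m) \<le> 1" if "1 \<le> j"
proof -
  show "0 \<le> (\<Sum>m=j..G. PM xi m)" by (intro sum_nonneg PM_nonneg)
  have "(\<Sum>m=j..G. PM xi m) \<le> (\<Sum>m=1..G. PM xi m)"
    using that by (intro sum_mono2) (auto simp: PM_nonneg)
  then show "(\<Sum>m=j..G. PM xi m) \<le> 1" using PM_sum by simp
qed

lemma AB_sum: "1 \<le> j \<Longrightarrow> j \<le> G \<Longrightarrow> (\<Sum>m\<in>{1..<j}. PM xi m) + (\<Sum>m=j..G. PM xi m) = 1"
proof -
  assume j: "1 \<le> j" "j \<le> G"
  have "{1..G} = {1..<j} \<union> {j..G}" using j by auto
  then have "(\<Sum>m=1..G. PM xi m) = (\<Sum>m\<in>{1..<j}. PM xi m) + (\<Sum>m=j..G. PM xi m)"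
    by (simp add: sum.union_disjoint[symmetric] ivl_disj_int)
  then show ?thesis using PM_sum by simp
qed

lemma q_le1: "1 \<le> j \<Longrightarrow> (sg j / tau eps j)\<^sup>2 \<le> 1"
proof -
  assume j: "1 \<le> j"
  define a where "a = (lam j)\<^sup>2/eps"
  define b where "b = 1/tau eps j"
  have a: "a > 0" using lam_nz j eps by (simp add: a_def)
  have b: "b > 0" using tau_pos j by (simp add: b_def)
  have q: "sg j / tau eps j = b / (a + b)" unfolding sig_def a_def b_def by simp
  have "0 \<le> b / (a+b)" "b/(a+b) \<le> 1" using a b by auto
  then show ?thesis unfolding q by (simp add: power_le_one)
qed

end

context S begin

definition "II j = (\<integral>xi. (\<Sum>m\<in>{1..<j}. PM xi m) + (sg j / tau eps j)\<^sup>2 * (\<Sum>m=j..G. PM xi m) \<partial>noise)"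

lemma II_nonneg: "1 \<le> j \<Longrightarrow> 0 \<le> II j"
proof -
  assume j: "1 \<le> j"
  have "\<And>xi. 0 \<le> (\<Sum>m\<in>{1..<j}. PM xi m) + (sg j / tau eps j)\<^sup>2 * (\<Sum>m=j..G. PM xi m)"
    using B_bounds[OF j] by (auto intro!: add_nonneg_nonneg sum_nonneg PM_nonneg mult_nonneg_nonneg)
  then show ?thesis unfolding II_def by (intro Bochner_Integration.integral_nonneg) auto
qed

lemma II_le1: "1 \<le> j \<Longrightarrow> j \<le> G \<Longrightarrow> II j \<le> 1"
proof -
  assume j: "1 \<le> j" "j \<le> G"
  show ?thesis unfolding II_def
  proof (rule integral_le_nn)
    fix xi show "0 \<le> (\<Sum>m\<in>{1..<j}. PM xi m) + (sg j / tau eps j)\<^sup>2 * (\<Sum>m=j..G. PM xi m)"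
      using B_bounds[OF j(1)] by (auto intro!: add_nonneg_nonneg sum_nonneg PM_nonneg)
  next
    have "(\<integral>\<^sup>+xi. ennreal ((\<Sum>m\<in>{1..<j}. PM xi m) + (sg j / tau eps j)\<^sup>2 * (\<Sum>m=j..G. PM xi m)) \<partial>noise)
        \<le> (\<integral>\<^sup>+xi. ennreal 1 \<partial>noise)"
    proof (rule nn_integral_mono, rule ennreal_leI)
      fix xi
      have "(sg j / tau eps j)\<^sup>2 * (\<Sum>m=j..G. PM xi m) \<le> 1 * (\<Sum>m=j..G. PM xi m)"
        using q_le1[OF j(1)] B_bounds[OF j(1)] by (intro mult_right_mono) auto
      then show "(\<Sum>m\<in>{1..<j}. PM xi m) + (sg j / tau eps j)\<^sup>2 * (\<Sum>m=j..G. PM xi m) \<le> 1"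
        using AB_sum[OF j, of xi] by linarith
    qed
    also have "\<dots> = ennreal 1" using NP.emeasure_space_1 by simp
    finally show "(\<integral>\<^sup>+xi. ennreal ((\<Sum>m\<in>{1..<j}. PM xi m) + (sg j / tau eps j)\<^sup>2 * (\<Sum>m=j..G. PM xi m)) \<partial>noise) \<le> ennreal 1" .
  qed simp
qed

lemma II_small: "1 \<le> j \<Longrightarrow> j \<le> mm \<Longrightarrow> II j \<le> real G * exp (- real mc / 5) + eps * Lmax lam mm / d\<^sup>2"
proof -
  assume j: "1 \<le> j" "j \<le> mm"
  have jG: "j \<le> G" using j mm_props mc_le by simp
  define q where "q = (sg j / tau eps j)\<^sup>2"
  define e where "e = exp (- real mc / 5)"
  have q0: "0 \<le> q" by (simp add: q_def)
  have qb: "q \<le> eps * Lmax lam mm / d\<^sup>2"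
  proof -
    have "q \<le> eps * Lm j / d\<^sup>2" unfolding q_def by (rule q_bound[OF j(1) jG])
    also have "\<dots> \<le> eps * Lmax lam mm / d\<^sup>2"
      using Lmax_ge[OF j] eps by (intro divide_right_mono mult_left_mono) auto
    finally show ?thesis .
  qed
  show ?thesis unfolding II_def q_def[symmetric]
  proof (rule integral_le_nn)
    fix xi show "0 \<le> (\<Sum>m\<in>{1..<j}. PM xi m) + q * (\<Sum>m=j..G. PM xi m)"
      using B_bounds[OF j(1)] q0 by (auto intro!: add_nonneg_nonneg sum_nonneg PM_nonneg)
  next
    have "(\<integral>\<^sup>+xi. ennreal ((\<Sum>m\<in>{1..<j}. PM xi m) + q * (\<Sum>m=j..G. PM xi m)) \<partial>noise)
        \<le> (\<integral>\<^sup>+xi. (\<Sum>m\<in>{1..<j}. ennreal (PM xi m)) + ennreal q \<partial>noise)"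
    proof (rule nn_integral_mono)
      fix xi
      have "q * (\<Sum>m=j..G. PM xi m) \<le> q * 1" using q0 B_bounds[OF j(1)] by (intro mult_left_mono) auto
      then have "ennreal ((\<Sum>m\<in>{1..<j}. PM xi m) + q * (\<Sum>m=j..G. PM xi m)) \<le> ennreal ((\<Sum>m\<in>{1..<j}. PM xi m) + q)"
        by (intro ennreal_leI) simp
      also have "\<dots> = ennreal (\<Sum>m\<in>{1..<j}. PM xi m) + ennreal q"
        using q0 by (intro ennreal_plus) (auto intro: sum_nonneg PM_nonneg)
      also have "ennreal (\<Sum>m\<in>{1..<j}. PM xi m) = (\<Sum>m\<in>{1..<j}. ennreal (PM xi m))"
        by (rule sum_ennreal[symmetric]) (rule PM_nonneg)
      finally show "ennreal ((\<Sum>m\<in>{1..<j}. PM xi m) + q * (\<Sum>m=j..G. PM xi m)) \<le> (\<Sum>m\<in>{1..<j}. ennreal (PM xi m)) + ennreal q" .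
    qed
    also have "\<dots> = (\<Sum>m\<in>{1..<j}. \<integral>\<^sup>+xi. ennreal (PM xi m) \<partial>noise) + ennreal q"
    proof -
      have "(\<integral>\<^sup>+xi. (\<Sum>m\<in>{1..<j}. ennreal (PM xi m)) + ennreal q \<partial>noise) = (\<integral>\<^sup>+xi. (\<Sum>m\<in>{1..<j}. ennreal (PM xi m)) \<partial>noise) + (\<integral>\<^sup>+xi. ennreal q \<partial>noise)"
        by (rule nn_integral_add) (use meas_PM in auto)
      also have "(\<integral>\<^sup>+xi. (\<Sum>m\<in>{1..<j}. ennreal (PM xi m)) \<partial>noise) = (\<Sum>m\<in>{1..<j}. \<integral>\<^sup>+xi. ennreal (PM xi m) \<partial>noise)"
        by (rule nn_integral_sum) (use meas_PM in auto)
      also have "(\<integral>\<^sup>+xi. ennreal q \<partial>noise) = ennreal q"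
        using NP.emeasure_space_1 by simp
      finally show ?thesis .
    qed
    also have "\<dots> \<le> (\<Sum>m\<in>{1..<j}. ennreal e) + ennreal q"
      using LT j unfolding e_def by (intro add_mono sum_mono) auto
    also have "\<dots> = ennreal (real (j - 1) * e + q)"
    proof -
      have "(\<Sum>m\<in>{1..<j}. ennreal e) = ennreal (\<Sum>m\<in>{1..<j}. e)" by (rule sum_ennreal) (simp add: e_def)
      moreover have "(\<Sum>m\<in>{1..<j}. e) = real (j - 1) * e" by simp
      ultimately show ?thesis using q0 by (simp add: ennreal_plus e_def)
    qed
    also have "\<dots> \<le> ennreal (real G * e + eps * Lmax lam mm / d\<^sup>2)"
    proof (rule ennreal_leI)
      have "real (j - 1) * e \<le> real G * e" using jG by (intro mult_right_mono) (auto simp: e_def)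
      then show "real (j - 1) * e + q \<le> real G * e + eps * Lmax lam mm / d\<^sup>2" using qb by simp
    qed
    finally show "(\<integral>\<^sup>+xi. ennreal ((\<Sum>m\<in>{1..<j}. PM xi m) + q * (\<Sum>m=j..G. PM xi m)) \<partial>noise) \<le> ennreal (real G * exp (- real mc / 5) + eps * Lmax lam mm / d\<^sup>2)"
      unfolding e_def .
  qed (use eps Lmax_pos[OF mm_props(1)] in \<open>auto intro!: add_nonneg_nonneg divide_nonneg_nonneg mult_nonneg_nonneg\<close>)
qed

end

context S begin

lemma part2:
  "(\<Sum>j=1..G. (eta j - th j)\<^sup>2 * II j) + (\<Sum>\<^sub>\<infinity> j\<in>{G<..}. (eta j - th j)\<^sup>2)
   \<le> bs mm + (\<Sum>\<^sub>\<infinity> j\<in>{1..}. (eta j - th j)\<^sup>2) * (eps * Lmax lam mm / d\<^sup>2 + 2 * exp (- real mc / 5 + ln (real G)))"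
proof -
  define X where "X = real G * exp (- real mc / 5) + eps * Lmax lam mm / d\<^sup>2"
  define Y where "Y = eps * Lmax lam mm / d\<^sup>2 + 2 * exp (- real mc / 5 + ln (real G))"
  have mmG: "mm \<le> G" using mm_props mc_le by simp
  have X0: "0 \<le> X" unfolding X_def using eps Lmax_pos[OF mm_props(1)]
    by (auto intro!: add_nonneg_nonneg divide_nonneg_nonneg mult_nonneg_nonneg)
  have G0: "0 < real G" using G_props by simp
  have eG: "exp (- real mc / 5 + ln (real G)) = real G * exp (- real mc / 5)"
    using G0 by (simp only: exp_add exp_ln mult.commute)
  have XY: "X \<le> Y" unfolding X_def Y_def eG using G0 by simp
  have sw: "\<And>j. (eta j - th j)\<^sup>2 = dl j" by (simp add: power2_commute)
  have "(\<Sum>j=1..G. dl j * II j) = (\<Sum>j=1..mm. dl j * II j) + (\<Sum>j\<in>{mm<..G}. dl j * II j)"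
    by (rule sum_split1[OF mmG])
  also have "(\<Sum>j=1..mm. dl j * II j) \<le> (\<Sum>j=1..mm. dl j * X)"
    unfolding X_def by (intro sum_mono mult_left_mono II_small) auto
  also have "(\<Sum>j\<in>{mm<..G}. dl j * II j) \<le> (\<Sum>j\<in>{mm<..G}. dl j)"
  proof (rule sum_mono)
    fix j assume j: "j \<in> {mm<..G}"
    then have "1 \<le> j" "j \<le> G" using mm_props by auto
    then have "dl j * II j \<le> dl j * 1" by (intro mult_left_mono II_le1) auto
    then show "dl j * II j \<le> dl j" by simp
  qed
  finally have s1: "(\<Sum>j=1..G. dl j * II j) \<le> X * (\<Sum>j=1..mm. dl j) + (\<Sum>j\<in>{mm<..G}. dl j)"
    by (simp add: sum_distrib_left mult.commute)
  have s2: "(\<Sum>j\<in>{mm<..G}. dl j) + bs G = bs mm" using bias_split[OF mmG] by simp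
  have s3: "(\<Sum>j=1..mm. dl j) \<le> (\<Sum>\<^sub>\<infinity> j\<in>{1..}. (eta j - th j)\<^sup>2)"
    using total_split[of mm] bias_nonneg[of mm] by simp
  have s4: "X * (\<Sum>j=1..mm. dl j) \<le> Y * (\<Sum>\<^sub>\<infinity> j\<in>{1..}. (eta j - th j)\<^sup>2)"
    using XY s3 X0 by (intro mult_mono) (auto intro: sum_nonneg)
  have s5: "X * (\<Sum>j=1..mm. dl j) \<le> (\<Sum>\<^sub>\<infinity> j\<in>{1..}. dl j) * Y" using s4 unfolding sw by (simp add: mult.commute)
  show ?thesis unfolding sw tail_G[unfolded sw] Y_def[symmetric] using s1 s2 s5 by linarith
qed

end

context S begin

definition "III j = (\<integral>xi. ((obs lam th eps xi j - lam j * th j) * (\<Sum>m=j..G. PM xi m))\<^sup>2 \<partial>noise)"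

lemma integrand_eq: "((obs lam th eps xi j - lam j * th j) * (\<Sum>m=j..G. PM xi m))\<^sup>2 = eps * ((xi j)\<^sup>2 * (\<Sum>m=j..G. PM xi m)\<^sup>2)"
  unfolding obs_def using eps by (simp add: power_mult_distrib)

lemma III_nonneg: "0 \<le> III j"
  unfolding III_def by (intro Bochner_Integration.integral_nonneg) auto

lemma cfe: "1 \<le> j \<Longrightarrow> (sg j)\<^sup>2 * (lam j)\<^sup>2 / eps\<^sup>2 * eps \<le> eps * Lm j"
proof -
  assume j: "1 \<le> j"
  have "(sg j)\<^sup>2 * (lam j)\<^sup>2 / eps\<^sup>2 * eps = sg j * r j" unfolding r_def using eps by (simp add: power2_eq_square)
  also have "\<dots> \<le> sg j * 1" using r_bounds[OF j] sig_pos[OF j] by (intro mult_left_mono) auto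
  also have "\<dots> \<le> eps * Lm j" using sig_le[OF j] by simp
  finally show ?thesis .
qed

lemma III_a: "1 \<le> j \<Longrightarrow> III j \<le> eps"
proof -
  assume j: "1 \<le> j"
  show ?thesis unfolding III_def
  proof (rule integral_le_nn)
    show "(\<integral>\<^sup>+xi. ennreal (((obs lam th eps xi j - lam j * th j) * (\<Sum>m=j..G. PM xi m))\<^sup>2) \<partial>noise) \<le> ennreal eps"
    proof -
      have "(\<integral>\<^sup>+xi. ennreal (((obs lam th eps xi j - lam j * th j) * (\<Sum>m=j..G. PM xi m))\<^sup>2) \<partial>noise)
          \<le> (\<integral>\<^sup>+xi. ennreal eps * ennreal ((xi j)\<^sup>2) \<partial>noise)"
      proof (rule nn_integral_mono)
        fix xi
        have "(\<Sum>m=j..G. PM xi m)\<^sup>2 \<le> 1" using B_bounds[OF j, of xi] by (simp add: power_le_one)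
        then have "(xi j)\<^sup>2 * (\<Sum>m=j..G. PM xi m)\<^sup>2 \<le> (xi j)\<^sup>2 * 1" by (intro mult_left_mono) auto
        then have "eps * ((xi j)\<^sup>2 * (\<Sum>m=j..G. PM xi m)\<^sup>2) \<le> eps * (xi j)\<^sup>2" using eps by (intro mult_left_mono) auto
        then show "ennreal (((obs lam th eps xi j - lam j * th j) * (\<Sum>m=j..G. PM xi m))\<^sup>2) \<le> ennreal eps * ennreal ((xi j)\<^sup>2)"
          unfolding integrand_eq using eps by (simp add: ennreal_mult[symmetric] ennreal_leI)
      qed
      also have "\<dots> = ennreal eps * (\<integral>\<^sup>+xi. ennreal ((xi j)\<^sup>2) \<partial>noise)"
        by (rule nn_integral_cmult) (unfold noise_def, measurable)
      also have "\<dots> = ennreal eps" by (simp add: nn_xi2)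
      finally show ?thesis .
    qed
  qed (use eps in auto)
qed

lemma III_b: "mp < j \<Longrightarrow> j \<le> G \<Longrightarrow> III j \<le> eps * (real G * (5 * exp (- real mc / 5)))"
proof -
  assume j: "mp < j" "j \<le> G"
  have j1: "1 \<le> j" using j mp_props mc_props by simp
  define e where "e = 5 * exp (- real mc / 5)"
  have e0: "0 \<le> e" by (simp add: e_def)
  show ?thesis unfolding III_def e_def[symmetric]
  proof (rule integral_le_nn)
    have "(\<integral>\<^sup>+xi. ennreal (((obs lam th eps xi j - lam j * th j) * (\<Sum>m=j..G. PM xi m))\<^sup>2) \<partial>noise)
        \<le> (\<integral>\<^sup>+xi. ennreal eps * (\<Sum>m=j..G. ennreal ((xi j)\<^sup>2 * PM xi m)) \<partial>noise)"
    proof (rule nn_integral_mono)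
      fix xi
      have B: "0 \<le> (\<Sum>m=j..G. PM xi m)" "(\<Sum>m=j..G. PM xi m) \<le> 1" using B_bounds[OF j1] by auto
      have "(\<Sum>m=j..G. PM xi m)\<^sup>2 \<le> (\<Sum>m=j..G. PM xi m)" using B by (simp add: power2_eq_square mult_left_le_one_le)
      then have "(xi j)\<^sup>2 * (\<Sum>m=j..G. PM xi m)\<^sup>2 \<le> (xi j)\<^sup>2 * (\<Sum>m=j..G. PM xi m)" by (intro mult_left_mono) auto
      then have "(xi j)\<^sup>2 * (\<Sum>m=j..G. PM xi m)\<^sup>2 \<le> (\<Sum>m=j..G. (xi j)\<^sup>2 * PM xi m)"
        by (simp add: sum_distrib_left)
      then have "eps * ((xi j)\<^sup>2 * (\<Sum>m=j..G. PM xi m)\<^sup>2) \<le> eps * (\<Sum>m=j..G. (xi j)\<^sup>2 * PM xi m)"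
        using eps by (intro mult_left_mono) auto
      then have "ennreal (((obs lam th eps xi j - lam j * th j) * (\<Sum>m=j..G. PM xi m))\<^sup>2) \<le> ennreal (eps * (\<Sum>m=j..G. (xi j)\<^sup>2 * PM xi m))"
        unfolding integrand_eq by (rule ennreal_leI)
      also have "\<dots> = ennreal eps * ennreal (\<Sum>m=j..G. (xi j)\<^sup>2 * PM xi m)"
        using eps by (intro ennreal_mult) (auto intro!: sum_nonneg mult_nonneg_nonneg PM_nonneg)
      also have "ennreal (\<Sum>m=j..G. (xi j)\<^sup>2 * PM xi m) = (\<Sum>m=j..G. ennreal ((xi j)\<^sup>2 * PM xi m))"
        by (rule sum_ennreal[symmetric]) (auto intro!: mult_nonneg_nonneg PM_nonneg)
      finally show "ennreal (((obs lam th eps xi j - lam j * th j) * (\<Sum>m=j..G. PM xi m))\<^sup>2) \<le> ennreal eps * (\<Sum>m=j..G. ennreal ((xi j)\<^sup>2 * PM xi m))" .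
    qed
    also have "\<dots> = ennreal eps * (\<Sum>m=j..G. \<integral>\<^sup>+xi. ennreal ((xi j)\<^sup>2 * PM xi m) \<partial>noise)"
    proof -
      have "(\<integral>\<^sup>+xi. ennreal eps * (\<Sum>m=j..G. ennreal ((xi j)\<^sup>2 * PM xi m)) \<partial>noise) = ennreal eps * (\<integral>\<^sup>+xi. (\<Sum>m=j..G. ennreal ((xi j)\<^sup>2 * PM xi m)) \<partial>noise)"
        by (rule nn_integral_cmult) (use meas_PM2 in auto)
      also have "(\<integral>\<^sup>+xi. (\<Sum>m=j..G. ennreal ((xi j)\<^sup>2 * PM xi m)) \<partial>noise) = (\<Sum>m=j..G. \<integral>\<^sup>+xi. ennreal ((xi j)\<^sup>2 * PM xi m) \<partial>noise)"
        by (rule nn_integral_sum) (use meas_PM2 in auto)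
      finally show ?thesis .
    qed
    also have "\<dots> \<le> ennreal eps * (\<Sum>m=j..G. ennreal e)"
      using UT j unfolding e_def by (intro mult_left_mono sum_mono) auto
    also have "(\<Sum>m=j..G. ennreal e) = ennreal (real (G + 1 - j) * e)"
      using e0 by (subst sum_ennreal) auto
    also have "ennreal eps * \<dots> = ennreal (eps * (real (G + 1 - j) * e))"
      using eps e0 by (simp add: ennreal_mult[symmetric])
    also have "\<dots> \<le> ennreal (eps * (real G * e))"
      using eps e0 j1 by (intro ennreal_leI mult_left_mono mult_right_mono) auto
    finally show "(\<integral>\<^sup>+xi. ennreal (((obs lam th eps xi j - lam j * th j) * (\<Sum>m=j..G. PM xi m))\<^sup>2) \<partial>noise) \<le> ennreal (eps * (real G * e))" .
  qed (use eps e0 in auto)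
qed

lemma part1:
  "(\<Sum>j=1..G. (sg j)\<^sup>2 * (lam j)\<^sup>2 / eps\<^sup>2 * III j)
   \<le> eps * real mp * Lbar lam mp + 10 * Lm 1 * exp (- real mc / 5 + 2 * ln (real G))"
proof -
  define cf where "cf j = (sg j)\<^sup>2 * (lam j)\<^sup>2 / eps\<^sup>2" for j
  define e where "e = 5 * exp (- real mc / 5)"
  have cf0: "0 \<le> cf j" for j by (simp add: cf_def)
  have mpG: "mp \<le> G" using mp_props by simp
  have mp1: "1 \<le> mp" using mp_props mc_props by simp
  have G0: "0 < real G" using G_props by simp
  have L10: "0 < Lm 1" using Lam_pos by simp
  have "(\<Sum>j=1..G. cf j * III j) = (\<Sum>j=1..mp. cf j * III j) + (\<Sum>j\<in>{mp<..G}. cf j * III j)"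
    by (rule sum_split1[OF mpG])
  also have "(\<Sum>j=1..mp. cf j * III j) \<le> (\<Sum>j=1..mp. eps * Lm j)"
  proof (rule sum_mono)
    fix j assume j: "j \<in> {1..mp}"
    have "cf j * III j \<le> cf j * eps" using III_a j cf0 by (intro mult_left_mono) auto
    also have "\<dots> \<le> eps * Lm j" using cfe j unfolding cf_def by auto
    finally show "cf j * III j \<le> eps * Lm j" .
  qed
  also have "(\<Sum>j\<in>{mp<..G}. cf j * III j) \<le> (\<Sum>j\<in>{mp<..G}. Lm 1 * (real G * e))"
  proof (rule sum_mono)
    fix j assume j: "j \<in> {mp<..G}"
    have j1: "1 \<le> j" using j mp1 by auto
    have "cf j * III j \<le> cf j * (eps * (real G * e))" using III_b j cf0 unfolding e_def by (intro mult_left_mono) auto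
    also have "\<dots> = (cf j * eps) * (real G * e)" by simp
    also have "\<dots> \<le> (eps * Lm j) * (real G * e)" using cfe[OF j1] unfolding cf_def
      by (intro mult_right_mono) (auto simp: e_def)
    also have "\<dots> \<le> Lm 1 * (real G * e)" using eps_Lam_le[OF j1] j
      by (intro mult_right_mono) (auto simp: e_def)
    finally show "cf j * III j \<le> Lm 1 * (real G * e)" .
  qed
  also have "(\<Sum>j\<in>{mp<..G}. Lm 1 * (real G * e)) = real (G - mp) * (Lm 1 * (real G * e))" by simp
  also have "\<dots> \<le> real G * (Lm 1 * (real G * e))" using L10 G0 by (intro mult_right_mono) (auto simp: e_def)
  finally have s: "(\<Sum>j=1..G. cf j * III j) \<le> eps * (\<Sum>j=1..mp. Lm j) + real G * (Lm 1 * (real G * e))"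
    by (simp add: sum_distrib_left)
  have "eps * (\<Sum>j=1..mp. Lm j) = eps * real mp * Lbar lam mp" using Lbar_sum[OF mp1] by simp
  moreover have "real G * (Lm 1 * (real G * e)) \<le> 10 * Lm 1 * exp (- real mc / 5 + 2 * ln (real G))"
  proof -
    have "exp (- real mc / 5 + 2 * ln (real G)) = (real G)\<^sup>2 * exp (- real mc / 5)"
    proof -
      have "exp (2 * ln (real G)) = exp (ln (real G)) ^ 2" by (subst exp_of_nat_mult[symmetric]) simp
      also have "\<dots> = (real G)\<^sup>2" using G0 by simp
      finally have "exp (2 * ln (real G)) = (real G)\<^sup>2" .
      then show ?thesis by (simp only: exp_add mult.commute)
    qed
    then show ?thesis unfolding e_def using L10 by (simp add: power2_eq_square)
  qed
  ultimately show ?thesis using s unfolding cf_def by linarith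
qed

end
theorem mainTheorem18:
  fixes lam th eta :: "nat \<Rightarrow> real" and tau :: "real \<Rightarrow> nat \<Rightarrow> real"
    and d C L eps_th :: real
  assumes lam_bdd: "bounded (range lam)"
    and lam_nz: "\<And>j. j \<ge> 1 \<Longrightarrow> lam j \<noteq> 0"
    and th_l2: "summable (\<lambda>j. (th (Suc j))\<^sup>2)"
    and diff_l2: "summable (\<lambda>j. (th (Suc j) - eta (Suc j))\<^sup>2)"
    and tau_pos: "\<And>eps j. 0 < eps \<Longrightarrow> eps < 1 \<Longrightarrow> j \<ge> 1 \<Longrightarrow> tau eps j > 0"
    and A: "assumptionA lam tau d"
    and E: "assumptionE lam C L"
    and eps_th: "0 < eps_th" "eps_th < 1"
    and mcirc_le: "\<And>eps. 0 < eps \<Longrightarrow> eps < eps_th \<Longrightarrow> mcirc lam th eta eps \<le> Gdim lam eps"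
  shows "\<forall>eps. 0 < eps \<and> eps < eps_th \<longrightarrow>
    (let G = Gdim lam eps; mc = mcirc lam th eta eps;
         mp = mplus lam th eta L eps; mm = mminus lam th eta C L d eps;
         Y = (\<lambda>xi. obs lam th eps xi);
         P = (\<lambda>xi m. postM lam tau eta C eps (Y xi) m)
     in
      (\<Sum>j=1..G. (sig lam tau eps j)\<^sup>2 * (lam j)\<^sup>2 / eps\<^sup>2 *
          (\<integral>xi. ((Y xi j - lam j * th j) * (\<Sum>m=j..G. P xi m))\<^sup>2 \<partial>noise))
        \<le> eps * real mp * Lbar lam mp + 10 * Lam lam 1 * exp (- real mc / 5 + 2 * ln (real G))
      \<and>
      (\<Sum>j=1..G. (eta j - th j)\<^sup>2 *
          (\<integral>xi. (\<Sum>m\<in>{1..<j}. P xi m) + (sig lam tau eps j / tau eps j)\<^sup>2 * (\<Sum>m=j..G. P xi m) \<partial>noise))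
        + (\<Sum>\<^sub>\<infinity> j\<in>{G<..}. (eta j - th j)\<^sup>2)
        \<le> bias th eta mm + (\<Sum>\<^sub>\<infinity> j\<in>{1..}. (eta j - th j)\<^sup>2) *
             (eps * Lmax lam mm / d\<^sup>2 + 2 * exp (- real mc / 5 + ln (real G))))"
proof (intro allI impI)
  fix eps assume e: "0 < eps \<and> eps < eps_th"
  interpret S lam th eta tau d C L eps
  proof
    show "\<And>j. 1 \<le> j \<Longrightarrow> 0 < tau eps j" using tau_pos e eps_th by auto
    show "mcirc lam th eta eps \<le> Gdim lam eps" using mcirc_le e by auto
  qed (use assms e in auto)
  show "let G = Gdim lam eps; mc = mcirc lam th eta eps;
         mp = mplus lam th eta L eps; mm = mminus lam th eta C L d eps;
         Y = (\<lambda>xi. obs lam th eps xi);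
         P = (\<lambda>xi m. postM lam tau eta C eps (Y xi) m)
     in
      (\<Sum>j=1..G. (sig lam tau eps j)\<^sup>2 * (lam j)\<^sup>2 / eps\<^sup>2 *
          (\<integral>xi. ((Y xi j - lam j * th j) * (\<Sum>m=j..G. P xi m))\<^sup>2 \<partial>noise))
        \<le> eps * real mp * Lbar lam mp + 10 * Lam lam 1 * exp (- real mc / 5 + 2 * ln (real G))
      \<and>
      (\<Sum>j=1..G. (eta j - th j)\<^sup>2 *
          (\<integral>xi. (\<Sum>m\<in>{1..<j}. P xi m) + (sig lam tau eps j / tau eps j)\<^sup>2 * (\<Sum>m=j..G. P xi m) \<partial>noise))
        + (\<Sum>\<^sub>\<infinity> j\<in>{G<..}. (eta j - th j)\<^sup>2)
        \<le> bias th eta mm + (\<Sum>\<^sub>\<infinity> j\<in>{1..}. (eta j - th j)\<^sup>2) *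
             (eps * Lmax lam mm / d\<^sup>2 + 2 * exp (- real mc / 5 + ln (real G)))"
    unfolding Let_def using part1 part2 unfolding III_def II_def by simp
qed

end
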